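(* Consider FedProx, as described in the context, and a round $t$ whose step size satisfies $\gamma_t\le\min\{\frac1{2L},\frac1{\alpha+\mu}\}$. Assume that the bounded variance, bounded stochastic gradient norm, $L$-smoothness and $\mu$-strong convexity assumptions hold. Then $$\mathbb{E}\|\overline{\mathbf{w}}_{t+1,0}-\mathbf{w}_\star\|^2\le\kappa\,\mathbb{E}\|\overline{\mathbf{w}}_{t,0}-\mathbf{w}_\star\|^2+A,$$ where $$\kappa=\frac{\alpha+\mu(1-\gamma_t(\alpha+\mu))^E}{\alpha+\mu}\le1-\gamma_t\mu$$ and $$A=\gamma_t^2E\sigma^2\sum_ip_i^2+6\gamma_t^2LE\Gamma+8\gamma_t^2E^3G^2.$$
   Context: Setting: there are $C$ clients with weights $p_i\ge0$ satisfying $\sum_ip_i=1$, local objectives $F_i:\mathbb{R}^D\to\mathbb{R}$, and global objective $F=\sum_ip_iF_i$. FedProx with $\alpha>0$, $E\ge1$ local steps and step sizes $\gamma_t$, with all clients participating: in round $t$, $\mathbf{w}^i_{t,0}=\overline{\mathbf{w}}_{t,0}$ and $$\mathbf{w}^i_{t,k+1}=(1-\alpha\gamma_t)\mathbf{w}^i_{t,k}+\alpha\gamma_t\overline{\mathbf{w}}_{t,0}-\gamma_tg_i(\mathbf{w}^i_{t,k})\quad(k=0,\dots,E-1),$$ with stochastic gradients $g_i$ of $F_i$ sampled independently across clients and steps given the past. Also $\overline{\mathbf{w}}_{t,k}=\sum_ip_i\mathbf{w}^i_{t,k}$ and $\overline{\mathbf{w}}_{t+1,0}=\overline{\mathbf{w}}_{t,E}$.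 Assumptions: - Unbiasedness: $\mathbb{E}\,g_i(\mathbf{w}^i_{t,k})=\nabla F_i(\mathbf{w}^i_{t,k})$. - Variance: $\mathbb{E}\|g_i-\nabla F_i\|^2\le\sigma^2$. - Bounded second moment: $\mathbb{E}\|g_i(\mathbf{w}^i_{t,k})\|^2\le G^2$. - Each $F_i$ is $L$-smooth and $\mu$-strongly convex. Notation: $\mathbf{w}_\star$ minimizes $F$ and $f_\star=F(\mathbf{w}_\star)$. Also $\mathbf{w}^i_\star=\arg\min F_i$ and $\Gamma=f_\star-\sum_ip_iF_i(\mathbf{w}^i_\star)$. $\mathbb{E}$ is total expectation. *)

theory Defs
  imports "HOL-Analysis.Analysis" "HOL-Probability.Probability"
begin

definition strongly_convex :: "real \<Rightarrow> ('v::real_inner \<Rightarrow> real) \<Rightarrow> bool" where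
  "strongly_convex \<mu> f \<longleftrightarrow> convex_on UNIV (\<lambda>x. f x - \<mu> / 2 * (norm x)\<^sup>2)"

definition L_smooth :: "real \<Rightarrow> ('v::real_inner \<Rightarrow> real) \<Rightarrow> ('v \<Rightarrow> 'v) \<Rightarrow> bool" where
  "L_smooth L f gf \<longleftrightarrow> (\<forall>x. GDERIV f x :> gf x) \<and> (\<forall>x y. norm (gf x - gf y) \<le> L * norm (x - y))"

text \<open>Local FedProx iterates of one client in one round, started at w0 (the server model
  of the round), with stochastic-gradient oracle Gi and noise samples xs k at local step k:
  w_0 = w0,  w_(k+1) = (1 - alpha gamma) w_k + alpha gamma w0 - gamma Gi w_k (xs k).\<close>
fun fedprox_local ::
  "real \<Rightarrow> real \<Rightarrow> ('v::real_vector \<Rightarrow> 'x \<Rightarrow> 'v) \<Rightarrow> 'v \<Rightarrow> (nat \<Rightarrow> 'x) \<Rightarrow> nat \<Rightarrow> 'v" where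
  "fedprox_local \<alpha> \<gamma> Gi w0 xs 0 = w0"
| "fedprox_local \<alpha> \<gamma> Gi w0 xs (Suc k) =
     (1 - \<alpha> * \<gamma>) *\<^sub>R fedprox_local \<alpha> \<gamma> Gi w0 xs k + (\<alpha> * \<gamma>) *\<^sub>R w0
     - \<gamma> *\<^sub>R Gi (fedprox_local \<alpha> \<gamma> Gi w0 xs k) (xs k)"

end

theory Submission
  imports Defs
begin
lemma norm_mult_self: "norm (x::'a::real_inner) * norm x = x \<bullet> x"
  by (metis power2_eq_square power2_norm_eq_inner)

lemma descent:
  fixes f :: "'v::real_inner \<Rightarrow> real"
  assumes sm: "L_smooth L f gf"
  shows "f (x + d) \<le> f x + gf x \<bullet> d + L / 2 * (norm d)\<^sup>2"
proof -
  have gd: "\<And>z. (f has_derivative (\<lambda>h. h \<bullet> gf z)) (at z)"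
    using sm unfolding L_smooth_def gderiv_def by auto
  have lip: "\<And>a b. norm (gf a - gf b) \<le> L * norm (a - b)"
    using sm unfolding L_smooth_def by auto
  define psi where "psi = (\<lambda>t::real. f (x + t *\<^sub>R d) - t * (gf x \<bullet> d) - t\<^sup>2 * (L * (norm d)\<^sup>2 / 2))"
  have der: "DERIV psi t :> (gf (x + t *\<^sub>R d) \<bullet> d - gf x \<bullet> d - t * (L * (norm d)\<^sup>2))" for t
  proof -
    have "((\<lambda>t. x + t *\<^sub>R d) has_derivative (\<lambda>h. h *\<^sub>R d)) (at t)"
      by (auto intro!: derivative_eq_intros)
    from has_derivative_compose[OF this gd[of "x + t *\<^sub>R d"]]
    have "((\<lambda>t. f (x + t *\<^sub>R d)) has_derivative (\<lambda>h. (h *\<^sub>R d) \<bullet> gf (x + t *\<^sub>R d))) (at t)"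
      by (simp add: o_def)
    then have "DERIV (\<lambda>t. f (x + t *\<^sub>R d)) t :> (gf (x + t *\<^sub>R d) \<bullet> d)"
      unfolding has_field_derivative_def by (rule has_derivative_eq_rhs) (auto simp: fun_eq_iff inner_commute)
    then show ?thesis unfolding psi_def
      by (auto intro!: derivative_eq_intros)
  qed
  have "psi 1 \<le> psi 0"
  proof (rule DERIV_nonpos_imp_nonincreasing[of 0 1 psi])
    fix t :: real assume t: "0 \<le> t" "t \<le> 1"
    have "gf (x + t *\<^sub>R d) \<bullet> d - gf x \<bullet> d = (gf (x + t *\<^sub>R d) - gf x) \<bullet> d"
      by (simp add: inner_diff_left)
    also have "\<dots> \<le> norm (gf (x + t *\<^sub>R d) - gf x) * norm d"
      by (rule norm_cauchy_schwarz)
    also have "\<dots> \<le> (L * norm (t *\<^sub>R d)) * norm d"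
      using lip[of "x + t *\<^sub>R d" x] by (intro mult_right_mono) auto
    also have "\<dots> = t * (L * (norm d)\<^sup>2)" using t by (simp add: power2_eq_square)
    finally show "\<exists>y. DERIV psi t :> y \<and> y \<le> 0" using der[of t] by (intro exI[of _ _]) auto
  qed simp
  then show ?thesis unfolding psi_def by simp
qed

lemma grad_bound:
  fixes f :: "'v::real_inner \<Rightarrow> real"
  assumes sm: "L_smooth L f gf" and L: "L > 0" and m: "\<And>y. f m \<le> f y"
  shows "(norm (gf x))\<^sup>2 \<le> 2 * L * (f x - f m)"
proof -
  have "f m \<le> f (x + (- (1/L)) *\<^sub>R gf x)" by (rule m)
  also have "\<dots> \<le> f x + gf x \<bullet> ((- (1/L)) *\<^sub>R gf x) + L / 2 * (norm ((- (1/L)) *\<^sub>R gf x))\<^sup>2"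
    by (rule descent[OF sm])
  also have "\<dots> = f x - (norm (gf x))\<^sup>2 / (2 * L)"
    using L by (simp add: power2_norm_eq_inner power_mult_distrib field_simps power2_eq_square norm_mult_self)
  finally show ?thesis using L by (simp add: field_simps)
qed

lemma strconv_tangent:
  fixes f :: "'v::real_inner \<Rightarrow> real"
  assumes sc: "strongly_convex \<mu> f" and gd: "\<And>z. GDERIV f z :> gf z"
  shows "f y \<ge> f x + gf x \<bullet> (y - x) + \<mu> / 2 * (norm (y - x))\<^sup>2"
proof -
  define h where "h = (\<lambda>z. f z - \<mu> / 2 * (norm z)\<^sup>2)"
  have hc: "convex_on UNIV h" using sc unfolding strongly_convex_def h_def by simp
  define d where "d = y - x"
  define psi where "psi = (\<lambda>t::real. h (x + t *\<^sub>R d))"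
  have pc: "convex_on UNIV psi"
  proof (rule convex_onI)
    fix t a b :: real assume t: "0 < t" "t < 1"
    have "x + ((1 - t) *\<^sub>R a + t *\<^sub>R b) *\<^sub>R d = (1 - t) *\<^sub>R (x + a *\<^sub>R d) + t *\<^sub>R (x + b *\<^sub>R d)"
      by (simp add: algebra_simps)
    then show "psi ((1 - t) *\<^sub>R a + t *\<^sub>R b) \<le> (1 - t) * psi a + t * psi b"
      unfolding psi_def using convex_onD[OF hc, of t "x + a *\<^sub>R d" "x + b *\<^sub>R d"] t by simp
  qed simp
  have gdf: "(f has_derivative (\<lambda>h. h \<bullet> gf x)) (at x)"
    using gd unfolding gderiv_def by auto
  have "((\<lambda>t. x + t *\<^sub>R d) has_derivative (\<lambda>h. h *\<^sub>R d)) (at 0)"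
    by (auto intro!: derivative_eq_intros)
  from has_derivative_compose[OF this, of f, simplified, OF gdf]
  have d1: "DERIV (\<lambda>t. f (x + t *\<^sub>R d)) 0 :> (gf x \<bullet> d)"
    unfolding has_field_derivative_def by (rule has_derivative_eq_rhs) (auto simp: fun_eq_iff inner_commute)
  have d2: "DERIV (\<lambda>t. (norm (x + t *\<^sub>R d))\<^sup>2) 0 :> 2 * (x \<bullet> d)"
  proof -
    have e: "(\<lambda>t. (norm (x + t *\<^sub>R d))\<^sup>2) = (\<lambda>t. x \<bullet> x + 2 * t * (x \<bullet> d) + t\<^sup>2 * (d \<bullet> d))"
      by (rule ext) (simp add: norm_mult_self power2_eq_square inner_add_left inner_add_right inner_commute algebra_simps)
    show ?thesis unfolding e by (auto intro!: derivative_eq_intros)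
  qed
  have "DERIV psi 0 :> (gf x \<bullet> d - \<mu> / 2 * (2 * (x \<bullet> d)))"
    unfolding psi_def h_def using DERIV_diff[OF d1 DERIV_cmult[OF d2, of "\<mu> / 2"]] by simp
  then have "psi 1 - psi 0 \<ge> (gf x \<bullet> d - \<mu> / 2 * (2 * (x \<bullet> d))) * (1 - 0)"
    by (intro convex_on_imp_above_tangent[OF pc]) (auto simp: has_field_derivative_at_within)
  then have "h y - h x \<ge> gf x \<bullet> d - \<mu> * (x \<bullet> d)"
    unfolding psi_def d_def by simp
  moreover have "(norm y)\<^sup>2 = (norm x)\<^sup>2 + 2 * (x \<bullet> d) + (norm d)\<^sup>2"
    unfolding d_def by (simp add: power2_norm_eq_inner inner_diff_left inner_diff_right inner_commute)
  ultimately show ?thesis unfolding h_def d_def by (simp add: algebra_simps)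
qed

lemma sum_lin3:
  fixes a b :: "nat \<Rightarrow> real"
  shows "(\<Sum>i\<in>S. p i * (a i + 2 * b i + c)) = (\<Sum>i\<in>S. p i * a i) + 2 * (\<Sum>i\<in>S. p i * b i) + (\<Sum>i\<in>S. p i) * c"
  by (simp add: sum.distrib sum_distrib_left sum_distrib_right algebra_simps)

lemma var_id:
  fixes v :: "nat \<Rightarrow> 'v::real_inner" and p :: "nat \<Rightarrow> real"
  assumes ps: "(\<Sum>i\<in>S. p i) = 1"
  shows "(\<Sum>i\<in>S. p i * (norm (v i - c))\<^sup>2) =
     (\<Sum>i\<in>S. p i * (norm (v i - (\<Sum>j\<in>S. p j *\<^sub>R v j)))\<^sup>2) + (norm ((\<Sum>j\<in>S. p j *\<^sub>R v j) - c))\<^sup>2"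
proof -
  define m where "m = (\<Sum>j\<in>S. p j *\<^sub>R v j)"
  have e: "(norm (v i - c))\<^sup>2 = (norm (v i - m))\<^sup>2 + 2 * ((v i - m) \<bullet> (m - c)) + (norm (m - c))\<^sup>2" for i
  proof -
    have "v i - c = (v i - m) + (m - c)" by simp
    then have "(norm (v i - c))\<^sup>2 = (norm ((v i - m) + (m - c)))\<^sup>2" by metis
    also have "\<dots> = (norm (v i - m))\<^sup>2 + 2 * ((v i - m) \<bullet> (m - c)) + (norm (m - c))\<^sup>2"
      unfolding norm_mult_self power2_norm_eq_inner inner_add_left inner_add_right by (simp add: inner_commute)
    finally show ?thesis .
  qed
  have z: "(\<Sum>i\<in>S. p i * ((v i - m) \<bullet> (m - c))) = 0"
  proof -
    have "(\<Sum>i\<in>S. p i * ((v i - m) \<bullet> (m - c))) = (\<Sum>i\<in>S. (p i *\<^sub>R (v i - m))) \<bullet> (m - c)"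
      by (simp add: inner_sum_left)
    also have "(\<Sum>i\<in>S. (p i *\<^sub>R (v i - m))) = m - (\<Sum>i\<in>S. p i) *\<^sub>R m"
      by (simp add: m_def scaleR_diff_right sum_subtractf scaleR_sum_left)
    finally show ?thesis using ps by simp
  qed
  have "(\<Sum>i\<in>S. p i * (norm (v i - c))\<^sup>2) = (\<Sum>i\<in>S. p i * (norm (v i - m))\<^sup>2) + 2 * (\<Sum>i\<in>S. p i * ((v i - m) \<bullet> (m - c))) + (\<Sum>i\<in>S. p i) * (norm (m - c))\<^sup>2"
    unfolding e by (rule sum_lin3)
  then show ?thesis using z ps unfolding m_def by simp
qed

lemma jensen_sq:
  fixes v :: "nat \<Rightarrow> 'v::real_inner" and p :: "nat \<Rightarrow> real"
  assumes ps: "(\<Sum>i\<in>S. p i) = 1" and pn: "\<And>i. i \<in> S \<Longrightarrow> p i \<ge> 0"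
  shows "(norm ((\<Sum>j\<in>S. p j *\<^sub>R v j) - c))\<^sup>2 \<le> (\<Sum>i\<in>S. p i * (norm (v i - c))\<^sup>2)"
    and "(\<Sum>i\<in>S. p i * (norm (v i - (\<Sum>j\<in>S. p j *\<^sub>R v j)))\<^sup>2) \<le> (\<Sum>i\<in>S. p i * (norm (v i - c))\<^sup>2)"
proof -
  have "0 \<le> (\<Sum>i\<in>S. p i * (norm (v i - (\<Sum>j\<in>S. p j *\<^sub>R v j)))\<^sup>2)"
    using pn by (intro sum_nonneg) auto
  then show "(norm ((\<Sum>j\<in>S. p j *\<^sub>R v j) - c))\<^sup>2 \<le> (\<Sum>i\<in>S. p i * (norm (v i - c))\<^sup>2)"
    "(\<Sum>i\<in>S. p i * (norm (v i - (\<Sum>j\<in>S. p j *\<^sub>R v j)))\<^sup>2) \<le> (\<Sum>i\<in>S. p i * (norm (v i - c))\<^sup>2)"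
    using var_id[OF ps, of v c] by auto
qed

lemma jensen_sq0:
  fixes v :: "nat \<Rightarrow> 'v::real_inner" and p :: "nat \<Rightarrow> real"
  assumes ps: "(\<Sum>i\<in>S. p i) = 1" and pn: "\<And>i. i \<in> S \<Longrightarrow> p i \<ge> 0"
  shows "(norm (\<Sum>j\<in>S. p j *\<^sub>R v j))\<^sup>2 \<le> (\<Sum>i\<in>S. p i * (norm (v i))\<^sup>2)"
  using jensen_sq(1)[OF ps pn, of v 0] by simp

lemma young_inner:
  fixes u v :: "'v::real_inner"
  shows "- (2 * c * (u \<bullet> v)) \<le> 2 * (norm u)\<^sup>2 + c\<^sup>2 / 2 * (norm v)\<^sup>2"
proof -
  have "0 \<le> (norm (2 *\<^sub>R u + c *\<^sub>R v))\<^sup>2" by simp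
  also have "(norm (2 *\<^sub>R u + c *\<^sub>R v))\<^sup>2 = 4 * (norm u)\<^sup>2 + 4 * c * (u \<bullet> v) + c\<^sup>2 * (norm v)\<^sup>2"
    by (simp add: norm_mult_self power2_norm_eq_inner inner_add_left inner_add_right inner_commute power2_eq_square algebra_simps)
  finally show ?thesis by simp
qed

lemma young_inner2:
  fixes u v :: "'v::real_inner"
  assumes "c > 0"
  shows "- (u \<bullet> v) \<le> c / 2 * (norm u)\<^sup>2 + 1 / (2 * c) * (norm v)\<^sup>2"
proof -
  have "0 \<le> (norm (c *\<^sub>R u + v))\<^sup>2" by simp
  also have "(norm (c *\<^sub>R u + v))\<^sup>2 = c\<^sup>2 * (norm u)\<^sup>2 + 2 * c * (u \<bullet> v) + (norm v)\<^sup>2"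
    by (simp add: norm_mult_self power2_norm_eq_inner inner_add_left inner_add_right inner_commute power2_eq_square algebra_simps)
  finally have "- (2 * c * (u \<bullet> v)) \<le> c\<^sup>2 * (norm u)\<^sup>2 + (norm v)\<^sup>2" by simp
  then have "- (u \<bullet> v) \<le> (c\<^sup>2 * (norm u)\<^sup>2 + (norm v)\<^sup>2) / (2 * c)"
    using assms by (simp add: field_simps)
  also have "\<dots> = c / 2 * (norm u)\<^sup>2 + 1 / (2 * c) * (norm v)\<^sup>2"
    using assms by (simp add: field_simps power2_eq_square)
  finally show ?thesis .
qed

lemma convex_sq:
  fixes u v :: "'v::real_inner"
  assumes "a \<ge> 0" "b \<ge> 0" "a + b = 1"
  shows "(norm (a *\<^sub>R u + b *\<^sub>R v))\<^sup>2 \<le> a * (norm u)\<^sup>2 + b * (norm v)\<^sup>2"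
proof -
  have "a * (norm u)\<^sup>2 + b * (norm v)\<^sup>2 - (norm (a *\<^sub>R u + b *\<^sub>R v))\<^sup>2 = a * b * (norm (u - v))\<^sup>2"
  proof -
    have b: "b = 1 - a" using assms by simp
    show ?thesis unfolding b
      by (simp add: norm_mult_self power2_norm_eq_inner inner_add_left inner_add_right inner_diff_left inner_diff_right inner_commute power2_eq_square algebra_simps)
  qed
  moreover have "a * b * (norm (u - v))\<^sup>2 \<ge> 0" using assms by simp
  ultimately show ?thesis by linarith
qed

lemma det_step:
  fixes x :: "nat \<Rightarrow> 'v::real_inner" and x0 ws :: 'v and wl :: "nat \<Rightarrow> 'v"
    and F :: "nat \<Rightarrow> 'v \<Rightarrow> real" and gF :: "nat \<Rightarrow> 'v \<Rightarrow> 'v" and p :: "nat \<Rightarrow> real"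
  assumes pn: "\<And>i. i < C \<Longrightarrow> p i \<ge> 0" and ps: "(\<Sum>i<C. p i) = 1"
    and sm: "\<And>i. i < C \<Longrightarrow> L_smooth L (F i) (gF i)"
    and sc: "\<And>i. i < C \<Longrightarrow> strongly_convex \<mu> (F i)"
    and L: "L > 0" and mu: "\<mu> > 0" and al: "\<alpha> > 0" and ga: "\<gamma> > 0"
    and gL: "\<gamma> \<le> 1 / (2 * L)" and gam: "\<gamma> * (\<alpha> + \<mu>) \<le> 1"
    and wsmin: "\<And>y. (\<Sum>i<C. p i * F i ws) \<le> (\<Sum>i<C. p i * F i y)"
    and wlmin: "\<And>i y. i < C \<Longrightarrow> F i (wl i) \<le> F i y"
  shows "(norm ((1 - \<alpha> * \<gamma>) *\<^sub>R ((\<Sum>i<C. p i *\<^sub>R x i) - ws) + (\<alpha> * \<gamma>) *\<^sub>R (x0 - ws)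
            - \<gamma> *\<^sub>R (\<Sum>i<C. p i *\<^sub>R gF i (x i))))\<^sup>2
     \<le> \<alpha> * \<gamma> * (norm (x0 - ws))\<^sup>2 + (1 - \<gamma> * (\<alpha> + \<mu>)) * (norm ((\<Sum>i<C. p i *\<^sub>R x i) - ws))\<^sup>2
       + 6 * L * \<gamma>\<^sup>2 * ((\<Sum>i<C. p i * F i ws) - (\<Sum>i<C. p i * F i (wl i)))
       + 5 * (\<Sum>i<C. p i * (norm (x i - x0))\<^sup>2)"
proof -
  define xb where "xb = (\<Sum>i<C. p i *\<^sub>R x i)"
  define g where "g = (\<lambda>i. gF i (x i))"
  define gb where "gb = (\<Sum>i<C. p i *\<^sub>R g i)"
  define e where "e = xb - ws"
  define e0 where "e0 = x0 - ws"
  define \<beta> where "\<beta> = 1 - \<alpha> * \<gamma>"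
  define Fx where "Fx = (\<Sum>i<C. p i * F i (x i))"
  define Fs where "Fs = (\<Sum>i<C. p i * F i ws)"
  define Fb where "Fb = (\<Sum>i<C. p i * F i xb)"
  define Fm where "Fm = (\<Sum>i<C. p i * F i (wl i))"
  define S0 where "S0 = (\<Sum>i<C. p i * (norm (x i - x0))\<^sup>2)"
  define S1 where "S1 = (\<Sum>i<C. p i * (norm (x i - xb))\<^sup>2)"
  define Q where "Q = (\<Sum>i<C. p i * (norm (g i))\<^sup>2)"
  have pn': "\<And>i. i \<in> {..<C} \<Longrightarrow> p i \<ge> 0" using pn by auto
  have ag1: "\<alpha> * \<gamma> \<le> 1"
  proof -
    have "\<alpha> * \<gamma> \<le> \<gamma> * (\<alpha> + \<mu>)" using mult_pos_pos[OF ga mu] by (simp add: algebra_simps)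
    then show ?thesis using gam by simp
  qed
  have ag0: "\<alpha> * \<gamma> \<ge> 0" using al ga by simp
  have Lg: "L * \<gamma> \<le> 1 / 2" using gL L by (simp add: field_simps)
  have s1: "(norm (\<beta> *\<^sub>R e + (\<alpha> * \<gamma>) *\<^sub>R e0 - \<gamma> *\<^sub>R gb))\<^sup>2
      = (norm (\<beta> *\<^sub>R e + (\<alpha> * \<gamma>) *\<^sub>R e0))\<^sup>2 - 2 * \<gamma> * ((\<beta> *\<^sub>R e + (\<alpha> * \<gamma>) *\<^sub>R e0) \<bullet> gb) + \<gamma>\<^sup>2 * (norm gb)\<^sup>2"
    by (simp add: norm_mult_self power2_norm_eq_inner inner_diff_left inner_diff_right inner_commute power2_eq_square algebra_simps)
  have s2: "(norm (\<beta> *\<^sub>R e + (\<alpha> * \<gamma>) *\<^sub>R e0))\<^sup>2 \<le> \<beta> * (norm e)\<^sup>2 + \<alpha> * \<gamma> * (norm e0)\<^sup>2"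
    using convex_sq[of \<beta> "\<alpha> * \<gamma>" e e0] ag1 ag0 unfolding \<beta>_def by simp
  have s3: "\<beta> *\<^sub>R e + (\<alpha> * \<gamma>) *\<^sub>R e0 = e + (\<alpha> * \<gamma>) *\<^sub>R (x0 - xb)"
    unfolding \<beta>_def e_def e0_def by (simp add: algebra_simps)
  have s4: "e \<bullet> gb = (\<Sum>i<C. p i * ((xb - x i) \<bullet> g i)) + (\<Sum>i<C. p i * ((x i - ws) \<bullet> g i))"
    unfolding e_def gb_def by (simp add: inner_sum_right sum.distrib[symmetric] algebra_simps inner_diff_left)
  have s5: "(x i - ws) \<bullet> g i \<ge> F i (x i) - F i ws + \<mu> / 2 * (norm (x i - ws))\<^sup>2" if "i < C" for i
  proof -
    have "F i ws \<ge> F i (x i) + gF i (x i) \<bullet> (ws - x i) + \<mu> / 2 * (norm (ws - x i))\<^sup>2"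
      using strconv_tangent[OF sc[OF that], of "gF i"] sm[OF that] unfolding L_smooth_def by blast
    moreover have "gF i (x i) \<bullet> (ws - x i) = - ((x i - ws) \<bullet> g i)"
      unfolding g_def by (simp add: inner_commute inner_diff_left inner_diff_right)
    moreover have "norm (ws - x i) = norm (x i - ws)" by (rule norm_minus_commute)
    ultimately show ?thesis by simp
  qed
  have s5': "(\<Sum>i<C. p i * ((x i - ws) \<bullet> g i)) \<ge> Fx - Fs + \<mu> / 2 * (\<Sum>i<C. p i * (norm (x i - ws))\<^sup>2)"
  proof -
    have "(\<Sum>i<C. p i * ((x i - ws) \<bullet> g i)) \<ge> (\<Sum>i<C. p i * (F i (x i) - F i ws + \<mu> / 2 * (norm (x i - ws))\<^sup>2))"
      using s5 pn by (intro sum_mono mult_left_mono) auto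
    moreover have "(\<Sum>i<C. p i * (F i (x i) - F i ws + \<mu> / 2 * (norm (x i - ws))\<^sup>2)) = Fx - Fs + \<mu> / 2 * (\<Sum>i<C. p i * (norm (x i - ws))\<^sup>2)"
      unfolding Fx_def Fs_def by (simp add: algebra_simps sum.distrib sum_subtractf sum_distrib_left)
    ultimately show ?thesis by simp
  qed
  have jw: "(norm e)\<^sup>2 \<le> (\<Sum>i<C. p i * (norm (x i - ws))\<^sup>2)"
    using jensen_sq(1)[OF ps pn', of x ws] unfolding e_def xb_def .
  have s6: "- (2 * \<gamma> * (\<Sum>i<C. p i * ((xb - x i) \<bullet> g i))) \<le> 2 * S1 + \<gamma>\<^sup>2 / 2 * Q"
  proof -
    have "- (2 * \<gamma> * (\<Sum>i<C. p i * ((xb - x i) \<bullet> g i))) = (\<Sum>i<C. p i * (- (2 * \<gamma> * ((xb - x i) \<bullet> g i))))"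
      by (subst sum_distrib_left, subst sum_negf[symmetric], rule sum.cong) (simp_all add: algebra_simps)
    also have "\<dots> \<le> (\<Sum>i<C. p i * (2 * (norm (xb - x i))\<^sup>2 + \<gamma>\<^sup>2 / 2 * (norm (g i))\<^sup>2))"
      using pn by (intro sum_mono mult_left_mono young_inner) auto
    also have "\<dots> = 2 * S1 + \<gamma>\<^sup>2 / 2 * Q"
      unfolding S1_def Q_def by (simp add: sum.distrib sum_distrib_left algebra_simps norm_minus_commute)
    finally show ?thesis .
  qed
  have jx0: "(norm (x0 - xb))\<^sup>2 \<le> S0"
    using jensen_sq(1)[OF ps pn', of x x0] unfolding S0_def xb_def by (simp add: norm_minus_commute)
  have jS1: "S1 \<le> S0"
    using jensen_sq(2)[OF ps pn', of x x0] unfolding S0_def S1_def xb_def by simp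
  have jgb: "(norm gb)\<^sup>2 \<le> Q"
    using jensen_sq0[OF ps pn', of g] unfolding gb_def Q_def .
  have s7: "- (2 * \<gamma> * (((\<alpha> * \<gamma>) *\<^sub>R (x0 - xb)) \<bullet> gb)) \<le> 2 * S0 + \<gamma>\<^sup>2 / 2 * Q"
  proof -
    have "- (2 * \<gamma> * (((\<alpha> * \<gamma>) *\<^sub>R (x0 - xb)) \<bullet> gb)) \<le> 2 * (norm ((\<alpha> * \<gamma>) *\<^sub>R (x0 - xb)))\<^sup>2 + \<gamma>\<^sup>2 / 2 * (norm gb)\<^sup>2"
      by (rule young_inner)
    also have "(norm ((\<alpha> * \<gamma>) *\<^sub>R (x0 - xb)))\<^sup>2 = (\<alpha> * \<gamma>)\<^sup>2 * (norm (x0 - xb))\<^sup>2"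
      using ag0 by (simp add: power_mult_distrib)
    also have "\<dots> \<le> 1 * S0"
      using jx0 ag0 ag1 by (intro mult_mono) (auto simp: power_le_one)
    finally have "- (2 * \<gamma> * (((\<alpha> * \<gamma>) *\<^sub>R (x0 - xb)) \<bullet> gb)) \<le> 2 * S0 + \<gamma>\<^sup>2 / 2 * (norm gb)\<^sup>2" by simp
    moreover have "\<gamma>\<^sup>2 / 2 * (norm gb)\<^sup>2 \<le> \<gamma>\<^sup>2 / 2 * Q" using jgb by (intro mult_left_mono) auto
    ultimately show ?thesis by linarith
  qed
  have gbnd: "(norm (g i))\<^sup>2 \<le> 2 * L * (F i (x i) - F i (wl i))" if "i < C" for i
    unfolding g_def using grad_bound[OF sm[OF that] L wlmin[OF that]] .
  have sQ: "Q \<le> 2 * L * (Fx - Fm)"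
  proof -
    have "Q \<le> (\<Sum>i<C. p i * (2 * L * (F i (x i) - F i (wl i))))"
      unfolding Q_def using gbnd pn by (intro sum_mono mult_left_mono) auto
    also have "\<dots> = 2 * L * (Fx - Fm)"
      unfolding Fx_def Fm_def by (simp add: sum_distrib_left sum_subtractf algebra_simps)
    finally show ?thesis .
  qed
  have s11: "Fx - Fs \<ge> (Fb - Fs) - \<gamma> * L * (Fb - Fm) - S1 / (2 * \<gamma>)"
  proof -
    have t: "F i (x i) \<ge> F i xb - \<gamma> * L * (F i xb - F i (wl i)) - 1 / (2 * \<gamma>) * (norm (x i - xb))\<^sup>2"
      if "i < C" for i
    proof -
      have "F i (x i) \<ge> F i xb + gF i xb \<bullet> (x i - xb) + \<mu> / 2 * (norm (x i - xb))\<^sup>2"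
        using strconv_tangent[OF sc[OF that], of "gF i"] sm[OF that] unfolding L_smooth_def by blast
      moreover have "\<mu> / 2 * (norm (x i - xb))\<^sup>2 \<ge> 0" using mu by simp
      moreover have "- (gF i xb \<bullet> (x i - xb)) \<le> \<gamma> / 2 * (norm (gF i xb))\<^sup>2 + 1 / (2 * \<gamma>) * (norm (x i - xb))\<^sup>2"
        by (rule young_inner2[OF ga])
      moreover have "\<gamma> / 2 * (norm (gF i xb))\<^sup>2 \<le> \<gamma> / 2 * (2 * L * (F i xb - F i (wl i)))"
        using grad_bound[OF sm[OF that] L wlmin[OF that], of xb] ga by (intro mult_left_mono) auto
      ultimately show ?thesis by (simp add: algebra_simps)
    qed
    have "Fx \<ge> (\<Sum>i<C. p i * (F i xb - \<gamma> * L * (F i xb - F i (wl i)) - 1 / (2 * \<gamma>) * (norm (x i - xb))\<^sup>2))"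
      unfolding Fx_def using t pn by (intro sum_mono mult_left_mono) auto
    also have "(\<Sum>i<C. p i * (F i xb - \<gamma> * L * (F i xb - F i (wl i)) - 1 / (2 * \<gamma>) * (norm (x i - xb))\<^sup>2))
       = Fb - \<gamma> * L * (Fb - Fm) - S1 / (2 * \<gamma>)"
      unfolding Fb_def Fm_def S1_def by (simp add: sum_subtractf sum.distrib sum_distrib_left sum_divide_distrib algebra_simps)
    finally show ?thesis by simp
  qed
  have Fbs: "Fb \<ge> Fs" unfolding Fb_def Fs_def by (rule wsmin)
  have Gam: "Fs \<ge> Fm"
  proof -
    have "Fm \<le> Fs" unfolding Fm_def Fs_def using wlmin pn by (intro sum_mono mult_left_mono) auto
    then show ?thesis by simp
  qed
  define t where "t = 2 * \<gamma> - 4 * L * \<gamma>\<^sup>2"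
  have t0: "t \<ge> 0"
  proof -
    have "t = 2 * \<gamma> * (1 - 2 * (L * \<gamma>))" by (simp add: t_def power2_eq_square algebra_simps)
    then show ?thesis using Lg ga by simp
  qed
  have t1: "t \<le> 2 * \<gamma>" unfolding t_def using L by simp
  have c1: "- t * (Fx - Fs) \<le> 2 * L * \<gamma>\<^sup>2 * (Fs - Fm) + S1"
  proof -
    have "- t * (Fx - Fs) \<le> - t * ((Fb - Fs) - \<gamma> * L * (Fb - Fm) - S1 / (2 * \<gamma>))"
      using s11 t0 by (simp add: mult_left_mono)
    also have "\<dots> = - t * (1 - \<gamma> * L) * (Fb - Fs) + t * \<gamma> * L * (Fs - Fm) + t / (2 * \<gamma>) * S1"
      by (simp add: algebra_simps)
    also have "- t * (1 - \<gamma> * L) * (Fb - Fs) \<le> 0"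
      using t0 Lg Fbs by (simp add: mult_nonneg_nonneg mult.commute)
    also have "t * \<gamma> * L * (Fs - Fm) \<le> 2 * \<gamma> * \<gamma> * L * (Fs - Fm)"
      using t1 ga L Gam by (intro mult_right_mono) auto
    also have "t / (2 * \<gamma>) * S1 \<le> 1 * S1"
      using t1 ga pn by (intro mult_right_mono) (auto simp: S1_def intro!: sum_nonneg)
    finally show ?thesis by (simp add: power2_eq_square algebra_simps)
  qed
  have main: "(norm (\<beta> *\<^sub>R e + (\<alpha> * \<gamma>) *\<^sub>R e0 - \<gamma> *\<^sub>R gb))\<^sup>2
     \<le> \<alpha> * \<gamma> * (norm e0)\<^sup>2 + (\<beta> - \<gamma> * \<mu>) * (norm e)\<^sup>2 + 6 * L * \<gamma>\<^sup>2 * (Fs - Fm) + 5 * S0"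
  proof -
    have A: "- (2 * \<gamma> * ((\<beta> *\<^sub>R e + (\<alpha> * \<gamma>) *\<^sub>R e0) \<bullet> gb)) =
       - (2 * \<gamma> * (\<Sum>i<C. p i * ((xb - x i) \<bullet> g i))) - 2 * \<gamma> * (\<Sum>i<C. p i * ((x i - ws) \<bullet> g i))
       - (2 * \<gamma> * (((\<alpha> * \<gamma>) *\<^sub>R (x0 - xb)) \<bullet> gb))"
      unfolding s3 inner_add_left s4 by (simp add: algebra_simps)
    have B: "- 2 * \<gamma> * (\<Sum>i<C. p i * ((x i - ws) \<bullet> g i)) \<le> - 2 * \<gamma> * (Fx - Fs) - \<gamma> * \<mu> * (norm e)\<^sup>2"
    proof -
      have "- 2 * \<gamma> * (\<Sum>i<C. p i * ((x i - ws) \<bullet> g i)) \<le> - 2 * \<gamma> * (Fx - Fs + \<mu> / 2 * (\<Sum>i<C. p i * (norm (x i - ws))\<^sup>2))"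
        using s5' ga by simp
      also have "\<dots> \<le> - 2 * \<gamma> * (Fx - Fs + \<mu> / 2 * (norm e)\<^sup>2)"
        using jw ga mu by (simp add: mult_left_mono)
      finally show ?thesis by (simp add: algebra_simps)
    qed
    have C: "\<gamma>\<^sup>2 * (norm gb)\<^sup>2 \<le> \<gamma>\<^sup>2 * Q" using jgb by (simp add: mult_left_mono)
    have D: "2 * \<gamma>\<^sup>2 * Q \<le> 4 * L * \<gamma>\<^sup>2 * (Fx - Fm)"
    proof -
      have "2 * \<gamma>\<^sup>2 * Q \<le> 2 * \<gamma>\<^sup>2 * (2 * L * (Fx - Fm))" using sQ by (intro mult_left_mono) auto
      then show ?thesis by (simp add: algebra_simps)
    qed
    have E: "4 * L * \<gamma>\<^sup>2 * (Fx - Fm) - 2 * \<gamma> * (Fx - Fs) = - t * (Fx - Fs) + 4 * L * \<gamma>\<^sup>2 * (Fs - Fm)"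
      unfolding t_def by (simp add: algebra_simps)
    show ?thesis
      using s1 s2 A B C D E c1 s6 s7 jS1 by (simp add: algebra_simps)
  qed
  show ?thesis using main
    unfolding \<beta>_def e_def e0_def gb_def g_def xb_def Fs_def Fm_def S0_def
    by (simp add: algebra_simps)
qed

definition (in prob_space) indep2 :: "'s measure \<Rightarrow> ('a \<Rightarrow> 's) \<Rightarrow> 't measure \<Rightarrow> ('a \<Rightarrow> 't) \<Rightarrow> bool" where
  "indep2 S Z T Y \<longleftrightarrow> random_variable S Z \<and> random_variable T Y \<and>
     (\<forall>A\<in>sets S. \<forall>B\<in>sets T. prob ((Z -` A \<inter> space M) \<inter> (Y -` B \<inter> space M)) = prob (Z -` A \<inter> space M) * prob (Y -` B \<inter> space M))"

lemma (in prob_space) indep2_compose: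
  assumes ind: "indep2 S Z T Y" and h: "h \<in> measurable T T'"
  shows "indep2 S Z T' (\<lambda>\<omega>. h (Y \<omega>))"
  unfolding indep2_def
proof (intro conjI ballI)
  show "random_variable S Z" using ind unfolding indep2_def by auto
  have rY: "random_variable T Y" using ind unfolding indep2_def by auto
  then show "random_variable T' (\<lambda>\<omega>. h (Y \<omega>))" using h by (rule measurable_compose)
  fix A B assume A: "A \<in> sets S" and B: "B \<in> sets T'"
  have B': "h -` B \<inter> space T \<in> sets T" using h B by (rule measurable_sets)
  have e: "(\<lambda>\<omega>. h (Y \<omega>)) -` B \<inter> space M = Y -` (h -` B \<inter> space T) \<inter> space M"
    using measurable_space[OF rY] by auto
  have "\<forall>A\<in>sets S. \<forall>B\<in>sets T. prob ((Z -` A \<inter> space M) \<inter> (Y -` B \<inter> space M)) = prob (Z -` A \<inter> space M) * prob (Y -` B \<inter> space M)"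
    using ind unfolding indep2_def by blast
  from bspec[OF bspec[OF this A] B']
  show "prob ((Z -` A \<inter> space M) \<inter> ((\<lambda>\<omega>. h (Y \<omega>)) -` B \<inter> space M)) =
      prob (Z -` A \<inter> space M) * prob ((\<lambda>\<omega>. h (Y \<omega>)) -` B \<inter> space M)"
    unfolding e .
qed

lemma (in prob_space) indep_var_indep2:
  assumes "indep_var S Z T Y" shows "indep2 S Z T Y"
  unfolding indep2_def
proof (intro conjI ballI)
  show "random_variable S Z" "random_variable T Y"
    using indep_var_rv1[OF assms] indep_var_rv2[OF assms] by auto
  fix A B assume "A \<in> sets S" "B \<in> sets T"
  from indep_varD[OF assms this]
  show "prob ((Z -` A \<inter> space M) \<inter> (Y -` B \<inter> space M)) = prob (Z -` A \<inter> space M) * prob (Y -` B \<inter> space M)"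
    by (simp add: vimage_def Int_def conj_commute conj_left_commute)
qed

lemma (in prob_space) indep_freeze:
  fixes f :: "'s \<times> 't \<Rightarrow> real"
  assumes ind: "indep2 S Z T Y" and fm: "f \<in> borel_measurable (S \<Otimes>\<^sub>M T)"
    and inner0: "\<And>z. z \<in> space S \<Longrightarrow> (\<integral>y. f (z, y) \<partial>distr M T Y) = 0"
  shows "(\<integral>\<omega>. f (Z \<omega>, Y \<omega>) \<partial>M) = 0"
proof -
  have rZ: "random_variable S Z" and rY: "random_variable T Y"
    using ind unfolding indep2_def by auto
  interpret PZ: prob_space "distr M S Z" by (rule prob_space_distr[OF rZ])
  interpret PY: prob_space "distr M T Y" by (rule prob_space_distr[OF rY])
  interpret P: pair_prob_space "distr M S Z" "distr M T Y" ..
  have m: "(\<lambda>x. (Z x, Y x)) \<in> measurable M (S \<Otimes>\<^sub>M T)" using rZ rY by (rule measurable_Pair)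
  have j: "distr M S Z \<Otimes>\<^sub>M distr M T Y = distr M (S \<Otimes>\<^sub>M T) (\<lambda>x. (Z x, Y x))"
  proof (rule pair_measure_eqI)
    show "sigma_finite_measure (distr M S Z)" ..
    show "sigma_finite_measure (distr M T Y)" ..
    show "sets (distr M S Z \<Otimes>\<^sub>M distr M T Y) = sets (distr M (S \<Otimes>\<^sub>M T) (\<lambda>x. (Z x, Y x)))" by simp
    fix A B assume A: "A \<in> sets (distr M S Z)" and B: "B \<in> sets (distr M T Y)"
    have "emeasure (distr M (S \<Otimes>\<^sub>M T) (\<lambda>x. (Z x, Y x))) (A \<times> B) = emeasure M ((\<lambda>x. (Z x, Y x)) -` (A \<times> B) \<inter> space M)"
      using A B by (intro emeasure_distr[OF m]) auto
    also have "(\<lambda>x. (Z x, Y x)) -` (A \<times> B) \<inter> space M = (Z -` A \<inter> space M) \<inter> (Y -` B \<inter> space M)" by auto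
    also have "emeasure M ((Z -` A \<inter> space M) \<inter> (Y -` B \<inter> space M)) = emeasure M (Z -` A \<inter> space M) * emeasure M (Y -` B \<inter> space M)"
      using ind A B unfolding indep2_def by (simp add: emeasure_eq_measure measure_nonneg ennreal_mult)
    also have "\<dots> = emeasure (distr M S Z) A * emeasure (distr M T Y) B"
      using rZ rY A B by (simp add: emeasure_distr)
    finally show "emeasure (distr M S Z) A * emeasure (distr M T Y) B = emeasure (distr M (S \<Otimes>\<^sub>M T) (\<lambda>x. (Z x, Y x))) (A \<times> B)" by simp
  qed
  have "(\<integral>\<omega>. f (Z \<omega>, Y \<omega>) \<partial>M) = integral\<^sup>L (distr M (S \<Otimes>\<^sub>M T) (\<lambda>x. (Z x, Y x))) f"
    by (rule integral_distr[OF m fm, symmetric])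
  also have "\<dots> = integral\<^sup>L (distr M S Z \<Otimes>\<^sub>M distr M T Y) f" using j by simp
  also have "\<dots> = 0"
  proof (cases "integrable (distr M S Z \<Otimes>\<^sub>M distr M T Y) f")
    case True
    have "integral\<^sup>L (distr M S Z \<Otimes>\<^sub>M distr M T Y) f = (\<integral>x. (\<integral>y. f (x, y) \<partial>distr M T Y) \<partial>distr M S Z)"
      using P.integral_fst'[OF True] by simp
    also have "\<dots> = (\<integral>x. 0 \<partial>distr M S Z)"
      by (rule Bochner_Integration.integral_cong) (auto simp: inner0)
    finally show ?thesis by simp
  next
    case False then show ?thesis by (rule not_integrable_integral_eq)
  qed
  finally show ?thesis .
qed

definition sqi :: "'a measure \<Rightarrow> ('a \<Rightarrow> 'v::euclidean_space) \<Rightarrow> bool" where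
  "sqi M f \<longleftrightarrow> f \<in> borel_measurable M \<and> integrable M (\<lambda>\<omega>. (norm (f \<omega>))\<^sup>2)"

lemma sq_le2: "(x + y)\<^sup>2 \<le> 2 * x\<^sup>2 + 2 * (y::real)\<^sup>2"
proof -
  have "(x + y)\<^sup>2 + (x - y)\<^sup>2 = 2 * x\<^sup>2 + 2 * y\<^sup>2" by (simp add: power2_eq_square algebra_simps)
  moreover have "(x - y)\<^sup>2 \<ge> 0" by simp
  ultimately show ?thesis by linarith
qed

lemma sq_add_le: "(norm (a + b))\<^sup>2 \<le> 2 * (norm a)\<^sup>2 + 2 * (norm (b::'v::real_normed_vector))\<^sup>2"
proof -
  have "norm (a + b) \<le> norm a + norm b" by (rule norm_triangle_ineq)
  then have "(norm (a + b))\<^sup>2 \<le> (norm a + norm b)\<^sup>2" by (intro power_mono) auto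
  also have "\<dots> \<le> 2 * (norm a)\<^sup>2 + 2 * (norm b)\<^sup>2"
    using sq_le2[of "norm a" "norm b"] .
  finally show ?thesis .
qed

lemma sqi_add:
  assumes "sqi M f" "sqi M g" shows "sqi M (\<lambda>\<omega>. f \<omega> + g \<omega>)"
  unfolding sqi_def
proof
  show m: "(\<lambda>\<omega>. f \<omega> + g \<omega>) \<in> borel_measurable M" using assms unfolding sqi_def by auto
  have i: "integrable M (\<lambda>\<omega>. 2 * (norm (f \<omega>))\<^sup>2 + 2 * (norm (g \<omega>))\<^sup>2)"
    using assms unfolding sqi_def by auto
  have mm: "(\<lambda>\<omega>. (norm (f \<omega> + g \<omega>))\<^sup>2) \<in> borel_measurable M" using m by measurable
  have ae: "AE x in M. norm ((norm (f x + g x))\<^sup>2) \<le> norm (2 * (norm (f x))\<^sup>2 + 2 * (norm (g x))\<^sup>2)"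
    using sq_add_le by (auto intro!: AE_I2)
  show "integrable M (\<lambda>\<omega>. (norm (f \<omega> + g \<omega>))\<^sup>2)"
    by (rule Bochner_Integration.integrable_bound[OF i mm ae])
qed

lemma sqi_scale:
  assumes "sqi M f" shows "sqi M (\<lambda>\<omega>. c *\<^sub>R f \<omega>)"
  using assms unfolding sqi_def by (auto simp: power_mult_distrib)

lemma sqi_uminus:
  assumes "sqi M f" shows "sqi M (\<lambda>\<omega>. - f \<omega>)"
  using assms unfolding sqi_def by auto

lemma sqi_diff:
  assumes "sqi M f" "sqi M g" shows "sqi M (\<lambda>\<omega>. f \<omega> - g \<omega>)"
  using sqi_add[OF assms(1) sqi_uminus[OF assms(2)]] by simp

lemma sqi_const:
  assumes "finite_measure M" shows "sqi M (\<lambda>\<omega>. c)"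
  unfolding sqi_def using finite_measure.integrable_const[OF assms] by auto

lemma sqi_sum:
  assumes "finite_measure M" "\<And>i. i \<in> S \<Longrightarrow> sqi M (f i)"
  shows "sqi M (\<lambda>\<omega>. \<Sum>i\<in>S. f i \<omega>)"
  using assms(2)
proof (induction S rule: infinite_finite_induct)
  case (infinite S) then show ?case using sqi_const[OF assms(1), of 0] by simp
next
  case empty then show ?case using sqi_const[OF assms(1), of 0] by simp
next
  case (insert x F)
  then show ?case by (simp add: sqi_add)
qed

lemma sqi_inner:
  assumes "sqi M f" "sqi M g" shows "integrable M (\<lambda>\<omega>. f \<omega> \<bullet> g \<omega>)"
proof -
  have i: "integrable M (\<lambda>\<omega>. (norm (f \<omega>))\<^sup>2 + (norm (g \<omega>))\<^sup>2)"
    using assms unfolding sqi_def by auto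
  have [measurable]: "f \<in> borel_measurable M" "g \<in> borel_measurable M" using assms unfolding sqi_def by auto
  have m: "(\<lambda>\<omega>. f \<omega> \<bullet> g \<omega>) \<in> borel_measurable M" by measurable
  have ae: "AE x in M. norm (f x \<bullet> g x) \<le> norm ((norm (f x))\<^sup>2 + (norm (g x))\<^sup>2)"
  proof (intro AE_I2)
    fix x
    have "\<bar>f x \<bullet> g x\<bar> \<le> norm (f x) * norm (g x)" by (rule Cauchy_Schwarz_ineq2)
    also have "\<dots> \<le> (norm (f x))\<^sup>2 + (norm (g x))\<^sup>2"
    proof -
      have "(norm (f x) - norm (g x))\<^sup>2 \<ge> 0" by simp
      then show ?thesis using mult_nonneg_nonneg[OF norm_ge_zero[of "f x"] norm_ge_zero[of "g x"]]
        by (simp add: power2_eq_square algebra_simps; linarith)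
    qed
    finally show "norm (f x \<bullet> g x) \<le> norm ((norm (f x))\<^sup>2 + (norm (g x))\<^sup>2)" by simp
  qed
  show ?thesis by (rule Bochner_Integration.integrable_bound[OF i m ae])
qed

lemma sqi_bound:
  assumes fm: "finite_measure M" and g: "g \<in> borel_measurable M" and f: "sqi M f"
    and b: "\<And>\<omega>. \<omega> \<in> space M \<Longrightarrow> norm (g \<omega>) \<le> a + b * norm (f \<omega>)" and ab: "a \<ge> 0" "b \<ge> 0"
  shows "sqi M g"
  unfolding sqi_def
proof
  show "g \<in> borel_measurable M" by fact
  have i: "integrable M (\<lambda>\<omega>. 2 * a\<^sup>2 + 2 * b\<^sup>2 * (norm (f \<omega>))\<^sup>2)"
      using f unfolding sqi_def by (intro Bochner_Integration.integrable_add finite_measure.integrable_const[OF fm] integrable_mult_right) auto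
  have m: "(\<lambda>\<omega>. (norm (g \<omega>))\<^sup>2) \<in> borel_measurable M" using g by measurable
  have ae: "AE x in M. norm ((norm (g x))\<^sup>2) \<le> norm (2 * a\<^sup>2 + 2 * b\<^sup>2 * (norm (f x))\<^sup>2)"
    proof (rule AE_I2)
      fix x assume x: "x \<in> space M"
      have "(norm (g x))\<^sup>2 \<le> (a + b * norm (f x))\<^sup>2" using b[OF x] by (intro power_mono) auto
      also have "\<dots> \<le> 2 * a\<^sup>2 + 2 * (b * norm (f x))\<^sup>2"
        by (rule sq_le2)
      finally show "norm ((norm (g x))\<^sup>2) \<le> norm (2 * a\<^sup>2 + 2 * b\<^sup>2 * (norm (f x))\<^sup>2)"
        by (simp add: power_mult_distrib)
    qed
  show "integrable M (\<lambda>\<omega>. (norm (g \<omega>))\<^sup>2)" by (rule Bochner_Integration.integrable_bound[OF i m ae])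
qed

lemma fedprox_local_cong:
  assumes "\<And>l. l < k \<Longrightarrow> xs l = ys l"
  shows "fedprox_local \<alpha> \<gamma> Gi w0 xs k = fedprox_local \<alpha> \<gamma> Gi w0 ys k"
  using assms by (induction k) auto

lemma sum_sq_le:
  fixes c :: "nat \<Rightarrow> real"
  shows "(\<Sum>j<k. c j)\<^sup>2 \<le> real k * (\<Sum>j<k. (c j)\<^sup>2)"
proof (cases "k = 0")
  case True then show ?thesis by simp
next
  case False
  have ps: "(\<Sum>j<k. 1 / real k) = 1" using False by simp
  have "(norm (\<Sum>j<k. (1 / real k) *\<^sub>R c j))\<^sup>2 \<le> (\<Sum>j<k. 1 / real k * (norm (c j))\<^sup>2)"
    by (rule jensen_sq0[OF ps]) auto
  then have "(\<bar>\<Sum>j<k. c j\<bar> / real k)\<^sup>2 \<le> (\<Sum>j<k. (c j)\<^sup>2) / real k"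
    by (simp add: sum_divide_distrib[symmetric] sum_distrib_left[symmetric])
  then have "(\<Sum>j<k. c j)\<^sup>2 / (real k)\<^sup>2 \<le> (\<Sum>j<k. (c j)\<^sup>2) / real k" by (simp add: power_divide)
  then show ?thesis using False by (simp add: field_simps power2_eq_square)
qed

locale fp = prob_space M for M :: "'w measure" +
  fixes N :: "'x measure" and C E :: nat and p :: "nat \<Rightarrow> real"
    and F :: "nat \<Rightarrow> 'v::euclidean_space \<Rightarrow> real" and gF :: "nat \<Rightarrow> 'v \<Rightarrow> 'v"
    and G :: "nat \<Rightarrow> 'v \<Rightarrow> 'x \<Rightarrow> 'v"
    and \<xi> :: "nat \<Rightarrow> nat \<Rightarrow> 'w \<Rightarrow> 'x"
    and wbar0 :: "'w \<Rightarrow> 'v"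
    and \<alpha> \<gamma> L \<mu> \<sigma> Gb :: real
    and wstar :: 'v and wloc_star :: "nat \<Rightarrow> 'v"
  assumes p_nonneg: "\<And>i. i < C \<Longrightarrow> p i \<ge> 0" and p_sum: "(\<Sum>i<C. p i) = 1"
    and E_pos: "E \<ge> 1" and alpha_pos: "\<alpha> > 0" and mu_pos: "\<mu> > 0"
    and gamma_pos: "\<gamma> > 0" and gamma_L: "\<gamma> \<le> 1 / (2 * L)" and gamma_am: "\<gamma> \<le> 1 / (\<alpha> + \<mu>)"
    and smooth: "\<And>i. i < C \<Longrightarrow> L_smooth L (F i) (gF i)"
    and strconv: "\<And>i. i < C \<Longrightarrow> strongly_convex \<mu> (F i)"
    and wstar_min: "\<And>x. (\<Sum>i<C. p i * F i wstar) \<le> (\<Sum>i<C. p i * F i x)"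
    and wloc_star_min: "\<And>i x. i < C \<Longrightarrow> F i (wloc_star i) \<le> F i x"
    and wbar0_meas: "wbar0 \<in> borel_measurable M"
    and xi_meas: "\<And>i k. i < C \<Longrightarrow> k < E \<Longrightarrow> \<xi> i k \<in> measurable M N"
    and G_meas: "\<And>i. i < C \<Longrightarrow> (\<lambda>(v, x). G i v x) \<in> borel_measurable (borel \<Otimes>\<^sub>M N)"
    and xi_indep: "indep_vars (\<lambda>_. N) (\<lambda>(i, k). \<xi> i k) ({..<C} \<times> {..<E})"
    and wbar0_indep: "indep_set
       (sigma_sets (space M) {wbar0 -` B \<inter> space M | B. B \<in> sets borel})
       (sigma_sets (space M) {(\<lambda>\<omega>. \<lambda>ik\<in>{..<C} \<times> {..<E}. \<xi> (fst ik) (snd ik) \<omega>) -` B \<inter> space M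
                                | B. B \<in> sets (Pi\<^sub>M ({..<C} \<times> {..<E}) (\<lambda>_. N))})"
    and wbar0_sq: "integrable M (\<lambda>\<omega>. (norm (wbar0 \<omega> - wstar))\<^sup>2)"
    and unbiased: "\<And>i k v. i < C \<Longrightarrow> k < E \<Longrightarrow>
       integrable M (\<lambda>\<omega>. G i v (\<xi> i k \<omega>)) \<and> (\<integral>\<omega>. G i v (\<xi> i k \<omega>) \<partial>M) = gF i v"
    and variance: "\<And>i k. i < C \<Longrightarrow> k < E \<Longrightarrow>
       integrable M (\<lambda>\<omega>. (norm (G i (fedprox_local \<alpha> \<gamma> (G i) (wbar0 \<omega>) (\<lambda>k. \<xi> i k \<omega>) k) (\<xi> i k \<omega>) - gF i (fedprox_local \<alpha> \<gamma> (G i) (wbar0 \<omega>) (\<lambda>k. \<xi> i k \<omega>) k)))\<^sup>2) \<and>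
       (\<integral>\<omega>. (norm (G i (fedprox_local \<alpha> \<gamma> (G i) (wbar0 \<omega>) (\<lambda>k. \<xi> i k \<omega>) k) (\<xi> i k \<omega>) - gF i (fedprox_local \<alpha> \<gamma> (G i) (wbar0 \<omega>) (\<lambda>k. \<xi> i k \<omega>) k)))\<^sup>2 \<partial>M) \<le> \<sigma>\<^sup>2"
    and second_moment: "\<And>i k. i < C \<Longrightarrow> k < E \<Longrightarrow>
       integrable M (\<lambda>\<omega>. (norm (G i (fedprox_local \<alpha> \<gamma> (G i) (wbar0 \<omega>) (\<lambda>k. \<xi> i k \<omega>) k) (\<xi> i k \<omega>)))\<^sup>2) \<and>
       (\<integral>\<omega>. (norm (G i (fedprox_local \<alpha> \<gamma> (G i) (wbar0 \<omega>) (\<lambda>k. \<xi> i k \<omega>) k) (\<xi> i k \<omega>)))\<^sup>2 \<partial>M) \<le> Gb\<^sup>2"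
begin

definition "I = {..<C} \<times> {..<E}"
definition "PI = Pi\<^sub>M I (\<lambda>_. N)"
definition "w i k \<omega> = fedprox_local \<alpha> \<gamma> (G i) (wbar0 \<omega>) (\<lambda>k. \<xi> i k \<omega>) k"
definition "g i k \<omega> = G i (w i k \<omega>) (\<xi> i k \<omega>)"
definition "nz i k \<omega> = g i k \<omega> - gF i (w i k \<omega>)"
definition "wb k \<omega> = (\<Sum>i<C. p i *\<^sub>R w i k \<omega>)"
definition "Xi \<omega> = (\<lambda>ik\<in>I. \<xi> (fst ik) (snd ik) \<omega>)"
definition "Wf j l v \<Xi> = fedprox_local \<alpha> \<gamma> (G j) v (\<lambda>l'. \<Xi> (j, l')) l"

lemma L_pos: "L > 0"
proof (rule ccontr)
  assume "\<not> L > 0"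
  then have "1 / (2 * L) \<le> 0" by (simp add: divide_nonpos_nonneg divide_nonpos_nonpos)
  then show False using gamma_L gamma_pos by linarith
qed

lemma G_comp:
  assumes i: "i < C" and f: "f \<in> borel_measurable K" and h: "h \<in> measurable K N"
  shows "(\<lambda>z. G i (f z) (h z)) \<in> borel_measurable K"
proof -
  have "(\<lambda>z. (\<lambda>(v, x). G i v x) (f z, h z)) \<in> borel_measurable K"
    by (rule measurable_compose[OF measurable_Pair[OF f h] G_meas[OF i]])
  then show ?thesis by simp
qed

lemma gF_lip: "i < C \<Longrightarrow> norm (gF i x - gF i y) \<le> L * norm (x - y)"
  using smooth unfolding L_smooth_def by blast

lemma gF_meas: assumes i: "i < C" shows "gF i \<in> borel_measurable borel"
proof (rule borel_measurable_continuous_onI)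
  have "L-lipschitz_on UNIV (gF i)"
    using gF_lip[OF i] L_pos by (intro lipschitz_onI) (auto simp: dist_norm)
  then show "continuous_on UNIV (gF i)" by (rule lipschitz_on_continuous_on)
qed

lemma gF_comp: "i < C \<Longrightarrow> f \<in> borel_measurable K \<Longrightarrow> (\<lambda>z. gF i (f z)) \<in> borel_measurable K"
  using measurable_compose[of f K borel "gF i"] gF_meas by auto

lemma w_meas: "i < C \<Longrightarrow> k \<le> E \<Longrightarrow> w i k \<in> borel_measurable M"
proof (induction k)
  case 0 then show ?case using wbar0_meas by (simp add: w_def)
next
  case (Suc k)
  then have ih: "w i k \<in> borel_measurable M" by simp
  have "(\<lambda>\<omega>. G i (w i k \<omega>) (\<xi> i k \<omega>)) \<in> borel_measurable M"
    using Suc by (intro G_comp ih xi_meas) auto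
  moreover have "w i (Suc k) = (\<lambda>\<omega>. (1 - \<alpha> * \<gamma>) *\<^sub>R w i k \<omega> + (\<alpha> * \<gamma>) *\<^sub>R wbar0 \<omega> - \<gamma> *\<^sub>R G i (w i k \<omega>) (\<xi> i k \<omega>))"
    by (auto simp: w_def fun_eq_iff)
  ultimately show ?case using ih wbar0_meas by simp
qed

lemma g_meas: "i < C \<Longrightarrow> k < E \<Longrightarrow> g i k \<in> borel_measurable M"
  unfolding g_def by (intro G_comp w_meas xi_meas) auto

lemma fm: "finite_measure M" by unfold_locales

lemma sqi_g: "i < C \<Longrightarrow> k < E \<Longrightarrow> sqi M (g i k)"
  unfolding sqi_def using g_meas second_moment unfolding g_def w_def by auto

lemma sqi_w0: "sqi M (\<lambda>\<omega>. wbar0 \<omega> - wstar)"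
  unfolding sqi_def using wbar0_sq wbar0_meas by auto

lemma w_Suc: "w i (Suc k) \<omega> = (1 - \<alpha> * \<gamma>) *\<^sub>R w i k \<omega> + (\<alpha> * \<gamma>) *\<^sub>R wbar0 \<omega> - \<gamma> *\<^sub>R g i k \<omega>"
  by (simp add: w_def g_def)

lemma w_0: "w i 0 \<omega> = wbar0 \<omega>" by (simp add: w_def)

lemma sqi_dw: "i < C \<Longrightarrow> k \<le> E \<Longrightarrow> sqi M (\<lambda>\<omega>. w i k \<omega> - wbar0 \<omega>)"
proof (induction k)
  case 0 then show ?case using sqi_const[OF fm, of 0] by (simp add: w_0)
next
  case (Suc k)
  have e: "(\<lambda>\<omega>. w i (Suc k) \<omega> - wbar0 \<omega>) = (\<lambda>\<omega>. (1 - \<alpha> * \<gamma>) *\<^sub>R (w i k \<omega> - wbar0 \<omega>) - \<gamma> *\<^sub>R g i k \<omega>)"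
    by (rule ext) (simp add: w_Suc algebra_simps)
  have h1: "sqi M (\<lambda>\<omega>. w i k \<omega> - wbar0 \<omega>)" using Suc by auto
  have h2: "sqi M (g i k)" using Suc by (intro sqi_g) auto
  show ?case unfolding e using sqi_diff[OF sqi_scale[OF h1, of "1 - \<alpha> * \<gamma>"] sqi_scale[OF h2, of \<gamma>]] by simp
qed

lemma sqi_ws: "i < C \<Longrightarrow> k \<le> E \<Longrightarrow> sqi M (\<lambda>\<omega>. w i k \<omega> - wstar)"
  using sqi_add[OF sqi_dw sqi_w0] by simp

lemma sqi_gFw: assumes "i < C" "k \<le> E" shows "sqi M (\<lambda>\<omega>. gF i (w i k \<omega>))"
proof (rule sqi_bound[OF fm _ sqi_ws[OF assms]])
  show "(\<lambda>\<omega>. gF i (w i k \<omega>)) \<in> borel_measurable M" using assms by (intro gF_comp w_meas)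
  fix \<omega>
  have "norm (gF i (w i k \<omega>)) \<le> norm (gF i wstar) + norm (gF i (w i k \<omega>) - gF i wstar)"
    by (rule norm_triangle_sub)
  also have "\<dots> \<le> norm (gF i wstar) + L * norm (w i k \<omega> - wstar)"
    using gF_lip[OF assms(1)] by simp
  finally show "norm (gF i (w i k \<omega>)) \<le> norm (gF i wstar) + L * norm (w i k \<omega> - wstar)" .
qed (use L_pos in auto)

lemma sqi_nz: "i < C \<Longrightarrow> k < E \<Longrightarrow> sqi M (nz i k)"
  unfolding nz_def using sqi_diff[OF sqi_g sqi_gFw] by (simp add: fun_eq_iff)

lemma wb_e: "wb k \<omega> - wstar = (\<Sum>i<C. p i *\<^sub>R (w i k \<omega> - wbar0 \<omega>)) + (wbar0 \<omega> - wstar)"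
proof -
  have "(\<Sum>i<C. p i *\<^sub>R (w i k \<omega> - wbar0 \<omega>)) = wb k \<omega> - (\<Sum>i<C. p i) *\<^sub>R wbar0 \<omega>"
    unfolding wb_def by (simp add: scaleR_diff_right sum_subtractf scaleR_sum_left)
  then show ?thesis using p_sum by simp
qed

lemma sqi_e: "k \<le> E \<Longrightarrow> sqi M (\<lambda>\<omega>. wb k \<omega> - wstar)"
  unfolding wb_e by (intro sqi_add sqi_sum[OF fm] sqi_scale sqi_dw sqi_w0) auto

lemma wb_0: "wb 0 \<omega> = wbar0 \<omega>"
  unfolding wb_def w_0 using p_sum by (simp add: scaleR_sum_left[symmetric])

end

context fp begin

lemma Xi_meas: "Xi \<in> measurable M PI"
  unfolding Xi_def PI_def I_def by (rule measurable_restrict) (auto intro: xi_meas)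

lemma w_Wf: assumes "j < C" "l \<le> E" shows "w j l \<omega> = Wf j l (wbar0 \<omega>) (Xi \<omega>)"
  unfolding w_def Wf_def Xi_def
  by (rule fedprox_local_cong) (use assms in \<open>auto simp: I_def\<close>)

lemma Wf_upd: assumes "l \<le> k" shows "Wf j l v (\<Xi>((i, k) := y)) = Wf j l v \<Xi>"
  unfolding Wf_def by (rule fedprox_local_cong) (use assms in auto)

lemma comp_meas: "(j, l) \<in> I \<Longrightarrow> (\<lambda>q. snd q (j, l)) \<in> measurable (borel \<Otimes>\<^sub>M PI) N"
  unfolding PI_def by (rule measurable_compose[OF measurable_snd measurable_component_singleton])

lemma Wf_meas: "j < C \<Longrightarrow> l \<le> E \<Longrightarrow> (\<lambda>q. Wf j l (fst q) (snd q)) \<in> borel_measurable (borel \<Otimes>\<^sub>M PI)"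
proof (induction l)
  case 0 then show ?case by (simp add: Wf_def)
next
  case (Suc l)
  then have ih: "(\<lambda>q. Wf j l (fst q) (snd q)) \<in> borel_measurable (borel \<Otimes>\<^sub>M PI)" by simp
  have c: "(\<lambda>q. snd q (j, l)) \<in> measurable (borel \<Otimes>\<^sub>M PI) N"
    using Suc by (intro comp_meas) (auto simp: I_def)
  have "(\<lambda>q. G j (Wf j l (fst q) (snd q)) (snd q (j, l))) \<in> borel_measurable (borel \<Otimes>\<^sub>M PI)"
    using Suc by (intro G_comp ih c) auto
  moreover have "(\<lambda>q. Wf j (Suc l) (fst q) (snd q)) = (\<lambda>q. (1 - \<alpha> * \<gamma>) *\<^sub>R Wf j l (fst q) (snd q) + (\<alpha> * \<gamma>) *\<^sub>R fst q - \<gamma> *\<^sub>R G j (Wf j l (fst q) (snd q)) (snd q (j, l)))"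
    by (auto simp: Wf_def fun_eq_iff)
  ultimately show ?case using ih by simp
qed

lemma indep_w0_Xi: "indep2 borel wbar0 PI Xi"
  unfolding indep2_def
proof (intro conjI ballI)
  show "random_variable borel wbar0" by (rule wbar0_meas)
  show "random_variable PI Xi" by (rule Xi_meas)
  fix A :: "'v set" and B :: "(nat \<times> nat \<Rightarrow> 'x) set"
  assume A: "A \<in> sets borel" and B: "B \<in> sets PI"
  have "\<forall>a\<in>sigma_sets (space M) {wbar0 -` B \<inter> space M | B. B \<in> sets borel}.
        \<forall>b\<in>sigma_sets (space M) {(\<lambda>\<omega>. \<lambda>ik\<in>{..<C} \<times> {..<E}. \<xi> (fst ik) (snd ik) \<omega>) -` B \<inter> space M
                                | B. B \<in> sets (Pi\<^sub>M ({..<C} \<times> {..<E}) (\<lambda>_. N))}. prob (a \<inter> b) = prob a * prob b"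
    using wbar0_indep unfolding indep_sets2_eq by blast
  moreover have "wbar0 -` A \<inter> space M \<in> sigma_sets (space M) {wbar0 -` B \<inter> space M | B. B \<in> sets borel}"
    using A by (intro sigma_sets.Basic) blast
  moreover have "Xi -` B \<inter> space M \<in> sigma_sets (space M) {(\<lambda>\<omega>. \<lambda>ik\<in>{..<C} \<times> {..<E}. \<xi> (fst ik) (snd ik) \<omega>) -` B \<inter> space M
                                | B. B \<in> sets (Pi\<^sub>M ({..<C} \<times> {..<E}) (\<lambda>_. N))}"
    using B unfolding Xi_def PI_def I_def by (intro sigma_sets.Basic) blast
  ultimately show "prob ((wbar0 -` A \<inter> space M) \<inter> (Xi -` B \<inter> space M)) = prob (wbar0 -` A \<inter> space M) * prob (Xi -` B \<inter> space M)"
    by blast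
qed

lemma indep_J:
  assumes ik: "(i, k) \<in> I"
  shows "indep2 (Pi\<^sub>M (I - {(i, k)}) (\<lambda>_. N)) (\<lambda>\<omega>. \<lambda>j\<in>I - {(i, k)}. \<xi> (fst j) (snd j) \<omega>) N (\<xi> i k)"
proof -
  have "indep_var (Pi\<^sub>M (I - {(i, k)}) (\<lambda>_. N)) (\<lambda>\<omega>. restrict (\<lambda>j. (\<lambda>(i, k). \<xi> i k) j \<omega>) (I - {(i, k)}))
           (Pi\<^sub>M {(i, k)} (\<lambda>_. N)) (\<lambda>\<omega>. restrict (\<lambda>j. (\<lambda>(i, k). \<xi> i k) j \<omega>) {(i, k)})"
    using ik unfolding I_def by (intro indep_var_restrict[OF xi_indep]) auto
  from indep2_compose[OF indep_var_indep2[OF this] measurable_component_singleton[of "(i, k)" "{(i, k)}" "\<lambda>_. N"]]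
  have "indep2 (Pi\<^sub>M (I - {(i, k)}) (\<lambda>_. N)) (\<lambda>\<omega>. restrict (\<lambda>j. (\<lambda>(i, k). \<xi> i k) j \<omega>) (I - {(i, k)})) N
     (\<lambda>\<omega>. restrict (\<lambda>j. (\<lambda>(i, k). \<xi> i k) j \<omega>) {(i, k)} (i, k))" by simp
  moreover have "(\<lambda>\<omega>. restrict (\<lambda>j. (\<lambda>(i, k). \<xi> i k) j \<omega>) (I - {(i, k)})) = (\<lambda>\<omega>. \<lambda>j\<in>I - {(i, k)}. \<xi> (fst j) (snd j) \<omega>)"
    by (auto simp: fun_eq_iff restrict_def split: prod.split)
  moreover have "(\<lambda>\<omega>. restrict (\<lambda>j. (\<lambda>(i, k). \<xi> i k) j \<omega>) {(i, k)} (i, k)) = \<xi> i k"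
    by (auto simp: fun_eq_iff)
  ultimately show ?thesis by simp
qed

lemma L1:
  assumes i: "i < C" and k: "k < E"
    and Hm: "(\<lambda>q. H (fst q) (snd q)) \<in> borel_measurable (borel \<Otimes>\<^sub>M PI)"
    and Hinv: "\<And>v \<Xi> y. H v (\<Xi>((i, k) := y)) = H v \<Xi>"
  shows "(\<integral>\<omega>. H (wbar0 \<omega>) (Xi \<omega>) \<bullet> nz i k \<omega> \<partial>M) = 0"
proof -
  have ik: "(i, k) \<in> I" using i k by (simp add: I_def)
  define \<phi> where "\<phi> = (\<lambda>q. H (fst q) (snd q) \<bullet> (G i (Wf i k (fst q) (snd q)) (snd q (i, k)) - gF i (Wf i k (fst q) (snd q))))"
  have Wm: "(\<lambda>q. Wf i k (fst q) (snd q)) \<in> borel_measurable (borel \<Otimes>\<^sub>M PI)" using i k by (intro Wf_meas) auto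
  have \<phi>m[measurable]: "\<phi> \<in> borel_measurable (borel \<Otimes>\<^sub>M PI)"
  proof -
    have "(\<lambda>q. G i (Wf i k (fst q) (snd q)) (snd q (i, k))) \<in> borel_measurable (borel \<Otimes>\<^sub>M PI)"
      by (intro G_comp[OF i Wm] comp_meas ik)
    moreover have "(\<lambda>q. gF i (Wf i k (fst q) (snd q))) \<in> borel_measurable (borel \<Otimes>\<^sub>M PI)"
      by (intro gF_comp[OF i Wm])
    ultimately show ?thesis unfolding \<phi>_def using Hm by (intro borel_measurable_inner borel_measurable_diff) auto
  qed
  have eq: "H (wbar0 \<omega>) (Xi \<omega>) \<bullet> nz i k \<omega> = \<phi> (wbar0 \<omega>, Xi \<omega>)" for \<omega>
  proof -
    have "Xi \<omega> (i, k) = \<xi> i k \<omega>" using ik by (simp add: Xi_def)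
    then show ?thesis unfolding \<phi>_def nz_def g_def using w_Wf[OF i, of k] k by simp
  qed
  have "(\<integral>\<omega>. \<phi> (wbar0 \<omega>, Xi \<omega>) \<partial>M) = 0"
  proof (rule indep_freeze[OF indep_w0_Xi \<phi>m])
    fix v :: 'v
    have vm: "(\<lambda>\<Xi>. \<phi> (v, \<Xi>)) \<in> borel_measurable PI" by measurable
    have "(\<integral>\<Xi>. \<phi> (v, \<Xi>) \<partial>distr M PI Xi) = (\<integral>\<omega>. \<phi> (v, Xi \<omega>) \<partial>M)"
      by (rule integral_distr[OF Xi_meas vm])
    also have "\<dots> = 0"
    proof -
      define J where "J = I - {(i, k)}"
      define XiJ where "XiJ = (\<lambda>\<omega>. \<lambda>j\<in>J. \<xi> (fst j) (snd j) \<omega>)"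
      define upd where "upd = (\<lambda>(\<Xi>::nat \<times> nat \<Rightarrow> 'x, y::'x). \<Xi>((i, k) := y))"
      have IJ: "insert (i, k) J = I" using ik unfolding J_def by auto
      have um: "upd \<in> measurable (Pi\<^sub>M J (\<lambda>_. N) \<Otimes>\<^sub>M N) PI"
        using measurable_add_dim[of "(i, k)" J "\<lambda>_. N"] unfolding upd_def PI_def IJ .
      define f where "f = (\<lambda>q. \<phi> (v, upd q))"
      have fmeas: "f \<in> borel_measurable (Pi\<^sub>M J (\<lambda>_. N) \<Otimes>\<^sub>M N)"
        unfolding f_def using um by measurable
      have "(\<integral>\<omega>. \<phi> (v, Xi \<omega>) \<partial>M) = (\<integral>\<omega>. f (XiJ \<omega>, \<xi> i k \<omega>) \<partial>M)"
      proof -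
        have "upd (XiJ \<omega>, \<xi> i k \<omega>) = Xi \<omega>" for \<omega>
          unfolding upd_def XiJ_def Xi_def J_def using ik by (auto simp: fun_eq_iff)
        then show ?thesis unfolding f_def by simp
      qed
      also have "\<dots> = 0"
      proof -
      have indJ: "indep2 (Pi\<^sub>M J (\<lambda>_. N)) XiJ N (\<xi> i k)"
        unfolding J_def XiJ_def by (rule indep_J[OF ik])
      have "(\<integral>\<omega>. f (XiJ \<omega>, \<xi> i k \<omega>) \<partial>M) = 0"
      proof (rule indep_freeze[OF indJ fmeas])
        fix \<Xi> :: "nat \<times> nat \<Rightarrow> 'x"
        define u where "u = Wf i k v \<Xi>"
        define c where "c = H v \<Xi>"
        have fe: "f (\<Xi>, y) = c \<bullet> G i u y - c \<bullet> gF i u" for y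
          unfolding f_def upd_def \<phi>_def u_def c_def by (simp add: Hinv Wf_upd inner_diff_right)
        have xm: "\<xi> i k \<in> measurable M N" using xi_meas i k by auto
        have Gm: "G i u \<in> borel_measurable N"
          using G_comp[OF i measurable_const[of u borel N] measurable_ident_sets[of N N]] by simp
        interpret P: prob_space "distr M N (\<xi> i k)" by (rule prob_space_distr[OF xm])
        have int: "integrable (distr M N (\<xi> i k)) (G i u)"
          using integrable_distr_eq[OF xm Gm] unbiased[OF i k] by simp
        have ig: "(\<integral>y. G i u y \<partial>distr M N (\<xi> i k)) = gF i u"
          using integral_distr[OF xm Gm] unbiased[OF i k] by simp
        have "(\<integral>y. f (\<Xi>, y) \<partial>distr M N (\<xi> i k)) = (\<integral>y. c \<bullet> G i u y - c \<bullet> gF i u \<partial>distr M N (\<xi> i k))"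
          unfolding fe ..
        also have "\<dots> = c \<bullet> (\<integral>y. G i u y \<partial>distr M N (\<xi> i k)) - c \<bullet> gF i u"
        proof -
          have "P.prob (space N) = 1" using P.prob_space by simp
          then show ?thesis using int by simp
        qed
        also have "\<dots> = 0" unfolding ig by simp
        finally show "(\<integral>y. f (\<Xi>, y) \<partial>distr M N (\<xi> i k)) = 0" .
      qed
      then show ?thesis .
      qed
      finally show ?thesis .
    qed
    finally show "(\<integral>\<Xi>. \<phi> (v, \<Xi>) \<partial>distr M PI Xi) = 0" .
  qed
  then show ?thesis unfolding eq .
qed

end

context fp begin

definition "Dk k \<omega> = (1 - \<alpha> * \<gamma>) *\<^sub>R (wb k \<omega> - wstar) + (\<alpha> * \<gamma>) *\<^sub>R (wbar0 \<omega> - wstar)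
   - \<gamma> *\<^sub>R (\<Sum>i<C. p i *\<^sub>R gF i (w i k \<omega>))"
definition "nb k \<omega> = (\<Sum>i<C. p i *\<^sub>R nz i k \<omega>)"
definition "Gam = (\<Sum>i<C. p i * F i wstar) - (\<Sum>i<C. p i * F i (wloc_star i))"
definition "a k = (\<integral>\<omega>. (norm (wb k \<omega> - wstar))\<^sup>2 \<partial>M)"
definition "a0 = (\<integral>\<omega>. (norm (wbar0 \<omega> - wstar))\<^sup>2 \<partial>M)"

lemma gam1: "\<gamma> * (\<alpha> + \<mu>) \<le> 1"
  using gamma_am alpha_pos mu_pos by (simp add: field_simps)

lemma Gam_nonneg: "Gam \<ge> 0"
proof -
  have "(\<Sum>i<C. p i * F i (wloc_star i)) \<le> (\<Sum>i<C. p i * F i wstar)"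
    using wloc_star_min p_nonneg by (intro sum_mono mult_left_mono) auto
  then show ?thesis unfolding Gam_def by simp
qed

lemma rec: "wb (Suc k) \<omega> - wstar = Dk k \<omega> - \<gamma> *\<^sub>R nb k \<omega>"
proof -
  have ws: "w i (Suc k) \<omega> = (1 - \<alpha> * \<gamma>) *\<^sub>R w i k \<omega> + (\<alpha> * \<gamma>) *\<^sub>R wbar0 \<omega> - \<gamma> *\<^sub>R gF i (w i k \<omega>) - \<gamma> *\<^sub>R nz i k \<omega>" for i
    unfolding w_Suc nz_def by (simp add: algebra_simps)
  have "wb (Suc k) \<omega> = (\<Sum>i<C. (1 - \<alpha> * \<gamma>) *\<^sub>R (p i *\<^sub>R w i k \<omega>) + (p i * (\<alpha> * \<gamma>)) *\<^sub>R wbar0 \<omega>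
       - \<gamma> *\<^sub>R (p i *\<^sub>R gF i (w i k \<omega>)) - \<gamma> *\<^sub>R (p i *\<^sub>R nz i k \<omega>))"
    unfolding wb_def ws by (rule sum.cong) (simp_all add: algebra_simps)
  also have "\<dots> = (1 - \<alpha> * \<gamma>) *\<^sub>R wb k \<omega> + ((\<Sum>i<C. p i) * (\<alpha> * \<gamma>)) *\<^sub>R wbar0 \<omega>
       - \<gamma> *\<^sub>R (\<Sum>i<C. p i *\<^sub>R gF i (w i k \<omega>)) - \<gamma> *\<^sub>R nb k \<omega>"
    unfolding wb_def nb_def by (simp add: sum.distrib sum_subtractf scaleR_sum_right scaleR_sum_left sum_distrib_right)
  finally have "wb (Suc k) \<omega> = (1 - \<alpha> * \<gamma>) *\<^sub>R wb k \<omega> + (\<alpha> * \<gamma>) *\<^sub>R wbar0 \<omega>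
       - \<gamma> *\<^sub>R (\<Sum>i<C. p i *\<^sub>R gF i (w i k \<omega>)) - \<gamma> *\<^sub>R nb k \<omega>" using p_sum by simp
  then show ?thesis unfolding Dk_def by (simp add: algebra_simps)
qed

lemma sqi_Dk: "k \<le> E \<Longrightarrow> sqi M (Dk k)"
proof -
  assume k: "k \<le> E"
  have s1: "sqi M (\<lambda>\<omega>. (1 - \<alpha> * \<gamma>) *\<^sub>R (wb k \<omega> - wstar))" using sqi_e[OF k] by (rule sqi_scale)
  have s2: "sqi M (\<lambda>\<omega>. (\<alpha> * \<gamma>) *\<^sub>R (wbar0 \<omega> - wstar))" using sqi_w0 by (rule sqi_scale)
  have s3: "sqi M (\<lambda>\<omega>. \<gamma> *\<^sub>R (\<Sum>i<C. p i *\<^sub>R gF i (w i k \<omega>)))"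
    using k by (intro sqi_scale sqi_sum[OF fm] sqi_gFw) auto
  show ?thesis using sqi_diff[OF sqi_add[OF s1 s2] s3] unfolding Dk_def by (simp add: fun_eq_iff)
qed

lemma sqi_nb: "k < E \<Longrightarrow> sqi M (nb k)"
  unfolding nb_def by (intro sqi_sum[OF fm]) (auto intro!: sqi_scale sqi_nz)

lemma det_apply:
  "(norm (Dk k \<omega>))\<^sup>2 \<le> \<alpha> * \<gamma> * (norm (wbar0 \<omega> - wstar))\<^sup>2 + (1 - \<gamma> * (\<alpha> + \<mu>)) * (norm (wb k \<omega> - wstar))\<^sup>2
     + 6 * L * \<gamma>\<^sup>2 * Gam + 5 * (\<Sum>i<C. p i * (norm (w i k \<omega> - wbar0 \<omega>))\<^sup>2)"
  unfolding Dk_def wb_def Gam_def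
  by (rule det_step[OF p_nonneg p_sum smooth strconv L_pos mu_pos alpha_pos gamma_pos gamma_L gam1 wstar_min wloc_star_min])

lemma drift_pt: "i < C \<Longrightarrow> k \<le> E \<Longrightarrow> norm (w i k \<omega> - wbar0 \<omega>) \<le> \<gamma> * (\<Sum>j<k. norm (g i j \<omega>))"
proof (induction k)
  case 0 then show ?case by (simp add: w_0)
next
  case (Suc k)
  have ag: "0 \<le> 1 - \<alpha> * \<gamma>" "1 - \<alpha> * \<gamma> \<le> 1"
    using gam1 alpha_pos gamma_pos mu_pos by (simp_all add: algebra_simps) (smt (verit) mult_pos_pos)
  have eqw: "w i (Suc k) \<omega> - wbar0 \<omega> = (1 - \<alpha> * \<gamma>) *\<^sub>R (w i k \<omega> - wbar0 \<omega>) - \<gamma> *\<^sub>R g i k \<omega>"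
    by (simp add: w_Suc algebra_simps)
  have "norm (w i (Suc k) \<omega> - wbar0 \<omega>) \<le> norm ((1 - \<alpha> * \<gamma>) *\<^sub>R (w i k \<omega> - wbar0 \<omega>)) + norm (\<gamma> *\<^sub>R g i k \<omega>)"
    unfolding eqw by (rule norm_triangle_ineq4)
  also have "\<dots> = (1 - \<alpha> * \<gamma>) * norm (w i k \<omega> - wbar0 \<omega>) + \<gamma> * norm (g i k \<omega>)"
    using ag gamma_pos by simp
  also have "\<dots> \<le> norm (w i k \<omega> - wbar0 \<omega>) + \<gamma> * norm (g i k \<omega>)"
    using ag by (simp add: mult_left_le_one_le)
  also have "\<dots> \<le> \<gamma> * (\<Sum>j<k. norm (g i j \<omega>)) + \<gamma> * norm (g i k \<omega>)" using Suc by simp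
  finally show ?case by (simp add: algebra_simps)
qed

lemma drift: assumes i: "i < C" and k: "k \<le> E"
  shows "(\<integral>\<omega>. (norm (w i k \<omega> - wbar0 \<omega>))\<^sup>2 \<partial>M) \<le> \<gamma>\<^sup>2 * (real k)\<^sup>2 * Gb\<^sup>2"
proof -
  have pt: "(norm (w i k \<omega> - wbar0 \<omega>))\<^sup>2 \<le> \<gamma>\<^sup>2 * real k * (\<Sum>j<k. (norm (g i j \<omega>))\<^sup>2)" for \<omega>
  proof -
    have "(norm (w i k \<omega> - wbar0 \<omega>))\<^sup>2 \<le> (\<gamma> * (\<Sum>j<k. norm (g i j \<omega>)))\<^sup>2"
      using drift_pt[OF i k] by (intro power_mono) auto
    also have "\<dots> = \<gamma>\<^sup>2 * (\<Sum>j<k. norm (g i j \<omega>))\<^sup>2" by (simp add: power_mult_distrib)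
    also have "\<dots> \<le> \<gamma>\<^sup>2 * (real k * (\<Sum>j<k. (norm (g i j \<omega>))\<^sup>2))"
      by (intro mult_left_mono sum_sq_le) auto
    finally show ?thesis by simp
  qed
  have ig: "j < k \<Longrightarrow> integrable M (\<lambda>\<omega>. (norm (g i j \<omega>))\<^sup>2)" for j
    using sqi_g[OF i, of j] k unfolding sqi_def by auto
  have "(\<integral>\<omega>. (norm (w i k \<omega> - wbar0 \<omega>))\<^sup>2 \<partial>M) \<le> (\<integral>\<omega>. \<gamma>\<^sup>2 * real k * (\<Sum>j<k. (norm (g i j \<omega>))\<^sup>2) \<partial>M)"
    using sqi_dw[OF i k] ig pt unfolding sqi_def by (intro Bochner_Integration.integral_mono) auto
  also have "\<dots> = \<gamma>\<^sup>2 * real k * (\<Sum>j<k. (\<integral>\<omega>. (norm (g i j \<omega>))\<^sup>2 \<partial>M))"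
    using ig by (simp add: integral_sum)
  also have "\<dots> \<le> \<gamma>\<^sup>2 * real k * (\<Sum>j<k. Gb\<^sup>2)"
    using second_moment[OF i] k unfolding g_def w_def
    by (intro mult_left_mono sum_mono) auto
  also have "\<dots> = \<gamma>\<^sup>2 * (real k)\<^sup>2 * Gb\<^sup>2" by (simp add: power2_eq_square)
  finally show ?thesis .
qed

definition "HD k v \<Xi> = (1 - \<alpha> * \<gamma>) *\<^sub>R ((\<Sum>j<C. p j *\<^sub>R Wf j k v \<Xi>) - wstar) + (\<alpha> * \<gamma>) *\<^sub>R (v - wstar)
      - \<gamma> *\<^sub>R (\<Sum>j<C. p j *\<^sub>R gF j (Wf j k v \<Xi>))"

lemma HD_eq: "k \<le> E \<Longrightarrow> Dk k \<omega> = HD k (wbar0 \<omega>) (Xi \<omega>)"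
  unfolding Dk_def HD_def wb_def using w_Wf by simp

lemma HD_meas: assumes k: "k \<le> E" shows "(\<lambda>q. HD k (fst q) (snd q)) \<in> borel_measurable (borel \<Otimes>\<^sub>M PI)"
proof -
  have m: "j \<in> {..<C} \<Longrightarrow> (\<lambda>q. Wf j k (fst q) (snd q)) \<in> borel_measurable (borel \<Otimes>\<^sub>M PI)" for j
    using Wf_meas k by auto
  have m2: "j \<in> {..<C} \<Longrightarrow> (\<lambda>q. gF j (Wf j k (fst q) (snd q))) \<in> borel_measurable (borel \<Otimes>\<^sub>M PI)" for j
    using gF_comp m by auto
  show ?thesis
    unfolding HD_def
    by (intro borel_measurable_add borel_measurable_diff borel_measurable_scaleR borel_measurable_sum
        borel_measurable_const m m2 measurable_fst) auto
qed

lemma HD_inv: "HD k v (\<Xi>((i, k) := y)) = HD k v \<Xi>"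
  unfolding HD_def by (simp add: Wf_upd)

lemma cross1: assumes i: "i < C" and k: "k < E"
  shows "(\<integral>\<omega>. Dk k \<omega> \<bullet> nz i k \<omega> \<partial>M) = 0"
proof -
  have k': "k \<le> E" using k by simp
  have "(\<integral>\<omega>. HD k (wbar0 \<omega>) (Xi \<omega>) \<bullet> nz i k \<omega> \<partial>M) = 0"
    by (rule L1[OF i k HD_meas[OF k'] HD_inv])
  then show ?thesis using HD_eq[OF k'] by simp
qed

lemma cross2: assumes i: "i < C" and j: "j < C" and ij: "j \<noteq> i" and k: "k < E"
  shows "(\<integral>\<omega>. nz j k \<omega> \<bullet> nz i k \<omega> \<partial>M) = 0"
proof -
  define Hn where "Hn = (\<lambda>v \<Xi>. G j (Wf j k v \<Xi>) (\<Xi> (j, k)) - gF j (Wf j k v \<Xi>))"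
  have jk: "(j, k) \<in> I" using j k by (simp add: I_def)
  have e: "nz j k \<omega> = Hn (wbar0 \<omega>) (Xi \<omega>)" for \<omega>
    unfolding Hn_def nz_def g_def using w_Wf[OF j, of k] k jk by (simp add: Xi_def)
  have Wm: "(\<lambda>q. Wf j k (fst q) (snd q)) \<in> borel_measurable (borel \<Otimes>\<^sub>M PI)" using j k by (intro Wf_meas) auto
  have m: "(\<lambda>q. Hn (fst q) (snd q)) \<in> borel_measurable (borel \<Otimes>\<^sub>M PI)"
  proof -
    have "(\<lambda>q. G j (Wf j k (fst q) (snd q)) (snd q (j, k))) \<in> borel_measurable (borel \<Otimes>\<^sub>M PI)"
      by (intro G_comp[OF j Wm] comp_meas jk)
    moreover have "(\<lambda>q. gF j (Wf j k (fst q) (snd q))) \<in> borel_measurable (borel \<Otimes>\<^sub>M PI)"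
      by (intro gF_comp[OF j Wm])
    ultimately show ?thesis unfolding Hn_def by (intro borel_measurable_diff) auto
  qed
  have inv: "Hn v (\<Xi>((i, k) := y)) = Hn v \<Xi>" for v \<Xi> y
    unfolding Hn_def using ij by (simp add: Wf_upd)
  show ?thesis using L1[OF i k m inv] unfolding e .
qed

end

context fp begin

lemma step:
  assumes k: "k < E"
  shows "a (Suc k) \<le> \<alpha> * \<gamma> * a0 + (1 - \<gamma> * (\<alpha> + \<mu>)) * a k + 6 * L * \<gamma>\<^sup>2 * Gam
     + 5 * (\<gamma>\<^sup>2 * (real k)\<^sup>2 * Gb\<^sup>2) + \<gamma>\<^sup>2 * (\<sigma>\<^sup>2 * (\<Sum>i<C. (p i)\<^sup>2))"
proof -
  have k': "k \<le> E" using k by simp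
  have sD: "sqi M (Dk k)" by (rule sqi_Dk[OF k'])
  have snb: "sqi M (nb k)" by (rule sqi_nb[OF k])
  have snz: "\<And>i. i < C \<Longrightarrow> sqi M (nz i k)" using sqi_nz k by auto
  have iD2: "integrable M (\<lambda>\<omega>. (norm (Dk k \<omega>))\<^sup>2)" using sD unfolding sqi_def by auto
  have iDnb: "integrable M (\<lambda>\<omega>. Dk k \<omega> \<bullet> nb k \<omega>)" by (rule sqi_inner[OF sD snb])
  have inbnb: "integrable M (\<lambda>\<omega>. nb k \<omega> \<bullet> nb k \<omega>)" by (rule sqi_inner[OF snb snb])
  have iDnz: "\<And>i. i < C \<Longrightarrow> integrable M (\<lambda>\<omega>. Dk k \<omega> \<bullet> nz i k \<omega>)" using sqi_inner[OF sD snz] by auto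
  have inznb: "\<And>i. i < C \<Longrightarrow> integrable M (\<lambda>\<omega>. nz i k \<omega> \<bullet> nb k \<omega>)" using sqi_inner[OF snz snb] by auto
  have inznz: "\<And>i j. i < C \<Longrightarrow> j < C \<Longrightarrow> integrable M (\<lambda>\<omega>. nz i k \<omega> \<bullet> nz j k \<omega>)" using sqi_inner[OF snz snz] by auto
  have pt: "(norm (wb (Suc k) \<omega> - wstar))\<^sup>2 = (norm (Dk k \<omega>))\<^sup>2 - 2 * \<gamma> * (Dk k \<omega> \<bullet> nb k \<omega>) + \<gamma>\<^sup>2 * (nb k \<omega> \<bullet> nb k \<omega>)" for \<omega>
    unfolding rec by (simp add: norm_mult_self power2_norm_eq_inner inner_diff_left inner_diff_right inner_commute power2_eq_square algebra_simps)
  have "a (Suc k) = (\<integral>\<omega>. (norm (Dk k \<omega>))\<^sup>2 \<partial>M) - 2 * \<gamma> * (\<integral>\<omega>. Dk k \<omega> \<bullet> nb k \<omega> \<partial>M) + \<gamma>\<^sup>2 * (\<integral>\<omega>. nb k \<omega> \<bullet> nb k \<omega> \<partial>M)"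
    unfolding a_def pt using iD2 iDnb inbnb by simp
  moreover have "(\<integral>\<omega>. Dk k \<omega> \<bullet> nb k \<omega> \<partial>M) = 0"
  proof -
    have "(\<integral>\<omega>. Dk k \<omega> \<bullet> nb k \<omega> \<partial>M) = (\<integral>\<omega>. (\<Sum>i<C. p i * (Dk k \<omega> \<bullet> nz i k \<omega>)) \<partial>M)"
      unfolding nb_def by (simp add: inner_sum_right)
    also have "\<dots> = (\<Sum>i<C. p i * (\<integral>\<omega>. Dk k \<omega> \<bullet> nz i k \<omega> \<partial>M))"
      using iDnz by (simp add: integral_sum)
    also have "\<dots> = 0" using cross1 k by simp
    finally show ?thesis .
  qed
  moreover have "\<gamma>\<^sup>2 * (\<integral>\<omega>. nb k \<omega> \<bullet> nb k \<omega> \<partial>M) \<le> \<gamma>\<^sup>2 * (\<sigma>\<^sup>2 * (\<Sum>i<C. (p i)\<^sup>2))"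
  proof (rule mult_left_mono[OF _ zero_le_power2])
    have row: "(\<integral>\<omega>. nz i k \<omega> \<bullet> nb k \<omega> \<partial>M) = p i * (\<integral>\<omega>. (norm (nz i k \<omega>))\<^sup>2 \<partial>M)" if i: "i < C" for i
    proof -
      have "(\<integral>\<omega>. nz i k \<omega> \<bullet> nb k \<omega> \<partial>M) = (\<integral>\<omega>. (\<Sum>j<C. p j * (nz i k \<omega> \<bullet> nz j k \<omega>)) \<partial>M)"
        unfolding nb_def by (simp add: inner_sum_right)
      also have "\<dots> = (\<Sum>j<C. p j * (\<integral>\<omega>. nz i k \<omega> \<bullet> nz j k \<omega> \<partial>M))"
        using inznz[OF i] by (simp add: integral_sum)
      also have "\<dots> = (\<Sum>j<C. (if j = i then p i * (\<integral>\<omega>. (norm (nz i k \<omega>))\<^sup>2 \<partial>M) else 0))"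
      proof (rule sum.cong)
        fix j assume j: "j \<in> {..<C}"
        show "p j * (\<integral>\<omega>. nz i k \<omega> \<bullet> nz j k \<omega> \<partial>M) = (if j = i then p i * (\<integral>\<omega>. (norm (nz i k \<omega>))\<^sup>2 \<partial>M) else 0)"
        proof (cases "j = i")
          case True then show ?thesis by (simp add: power2_norm_eq_inner)
        next
          case False
          have "(\<integral>\<omega>. nz i k \<omega> \<bullet> nz j k \<omega> \<partial>M) = 0"
            using cross2[OF _ i _ k, of j] j False by (simp add: inner_commute)
          then show ?thesis using False by simp
        qed
      qed simp
      also have "\<dots> = p i * (\<integral>\<omega>. (norm (nz i k \<omega>))\<^sup>2 \<partial>M)" using i by simp
      finally show ?thesis .
    qed
    have "(\<integral>\<omega>. nb k \<omega> \<bullet> nb k \<omega> \<partial>M) = (\<integral>\<omega>. (\<Sum>i<C. p i * (nz i k \<omega> \<bullet> nb k \<omega>)) \<partial>M)"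
      by (subst (1) nb_def) (simp add: inner_sum_left)
    also have "\<dots> = (\<Sum>i<C. p i * (\<integral>\<omega>. nz i k \<omega> \<bullet> nb k \<omega> \<partial>M))"
      using inznb by (simp add: integral_sum)
    also have "\<dots> = (\<Sum>i<C. (p i)\<^sup>2 * (\<integral>\<omega>. (norm (nz i k \<omega>))\<^sup>2 \<partial>M))"
      by (rule sum.cong) (simp_all add: row power2_eq_square mult.assoc)
    also have "\<dots> \<le> (\<Sum>i<C. (p i)\<^sup>2 * \<sigma>\<^sup>2)"
    proof (rule sum_mono)
      fix i assume "i \<in> {..<C}"
      then have "(\<integral>\<omega>. (norm (nz i k \<omega>))\<^sup>2 \<partial>M) \<le> \<sigma>\<^sup>2"
        using variance[of i k] k unfolding nz_def g_def w_def by auto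
      then show "(p i)\<^sup>2 * (\<integral>\<omega>. (norm (nz i k \<omega>))\<^sup>2 \<partial>M) \<le> (p i)\<^sup>2 * \<sigma>\<^sup>2"
        by (intro mult_left_mono) auto
    qed
    also have "\<dots> = \<sigma>\<^sup>2 * (\<Sum>i<C. (p i)\<^sup>2)" by (simp add: sum_distrib_left mult.commute)
    finally show "(\<integral>\<omega>. nb k \<omega> \<bullet> nb k \<omega> \<partial>M) \<le> \<sigma>\<^sup>2 * (\<Sum>i<C. (p i)\<^sup>2)" .
  qed
  moreover have "(\<integral>\<omega>. (norm (Dk k \<omega>))\<^sup>2 \<partial>M) \<le> \<alpha> * \<gamma> * a0 + (1 - \<gamma> * (\<alpha> + \<mu>)) * a k + 6 * L * \<gamma>\<^sup>2 * Gam
     + 5 * (\<gamma>\<^sup>2 * (real k)\<^sup>2 * Gb\<^sup>2)"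
  proof -
    have i0: "integrable M (\<lambda>\<omega>. (norm (wbar0 \<omega> - wstar))\<^sup>2)" using sqi_w0 unfolding sqi_def by auto
    have ie: "integrable M (\<lambda>\<omega>. (norm (wb k \<omega> - wstar))\<^sup>2)" using sqi_e[OF k'] unfolding sqi_def by auto
    have idw: "\<And>i. i < C \<Longrightarrow> integrable M (\<lambda>\<omega>. (norm (w i k \<omega> - wbar0 \<omega>))\<^sup>2)"
      using sqi_dw k' unfolding sqi_def by auto
    have isum: "integrable M (\<lambda>\<omega>. \<Sum>i<C. p i * (norm (w i k \<omega> - wbar0 \<omega>))\<^sup>2)"
      using idw by (intro Bochner_Integration.integrable_sum Bochner_Integration.integrable_mult_right) auto
    have "(\<integral>\<omega>. (norm (Dk k \<omega>))\<^sup>2 \<partial>M) \<le> (\<integral>\<omega>. \<alpha> * \<gamma> * (norm (wbar0 \<omega> - wstar))\<^sup>2 + (1 - \<gamma> * (\<alpha> + \<mu>)) * (norm (wb k \<omega> - wstar))\<^sup>2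
     + 6 * L * \<gamma>\<^sup>2 * Gam + 5 * (\<Sum>i<C. p i * (norm (w i k \<omega> - wbar0 \<omega>))\<^sup>2) \<partial>M)"
      using iD2 i0 ie isum det_apply by (intro Bochner_Integration.integral_mono) auto
    also have "\<dots> = \<alpha> * \<gamma> * a0 + (1 - \<gamma> * (\<alpha> + \<mu>)) * a k + 6 * L * \<gamma>\<^sup>2 * Gam
       + 5 * (\<Sum>i<C. p i * (\<integral>\<omega>. (norm (w i k \<omega> - wbar0 \<omega>))\<^sup>2 \<partial>M))"
      using i0 ie isum idw prob_space by (simp add: a_def a0_def integral_sum)
    also have "(\<Sum>i<C. p i * (\<integral>\<omega>. (norm (w i k \<omega> - wbar0 \<omega>))\<^sup>2 \<partial>M)) \<le> (\<Sum>i<C. p i * (\<gamma>\<^sup>2 * (real k)\<^sup>2 * Gb\<^sup>2))"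
      using drift k' p_nonneg by (intro sum_mono mult_left_mono) auto
    also have "\<dots> = \<gamma>\<^sup>2 * (real k)\<^sup>2 * Gb\<^sup>2" using p_sum by (simp add: sum_distrib_right[symmetric])
    finally show ?thesis by simp
  qed
  ultimately have "a (Suc k) = (\<integral>\<omega>. (norm (Dk k \<omega>))\<^sup>2 \<partial>M) + \<gamma>\<^sup>2 * (\<integral>\<omega>. nb k \<omega> \<bullet> nb k \<omega> \<partial>M)"
    and "\<gamma>\<^sup>2 * (\<integral>\<omega>. nb k \<omega> \<bullet> nb k \<omega> \<partial>M) \<le> \<gamma>\<^sup>2 * (\<sigma>\<^sup>2 * (\<Sum>i<C. (p i)\<^sup>2))"
    and "(\<integral>\<omega>. (norm (Dk k \<omega>))\<^sup>2 \<partial>M) \<le> \<alpha> * \<gamma> * a0 + (1 - \<gamma> * (\<alpha> + \<mu>)) * a k + 6 * L * \<gamma>\<^sup>2 * Gam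
     + 5 * (\<gamma>\<^sup>2 * (real k)\<^sup>2 * Gb\<^sup>2)" by simp_all
  then show ?thesis by linarith
qed

end

context fp begin

lemma a_0: "a 0 = a0" unfolding a_def a0_def wb_0 ..

lemma a0_nonneg: "a0 \<ge> 0" unfolding a0_def by (intro integral_nonneg_AE) auto

lemma unroll:
  defines "r \<equiv> 1 - \<gamma> * (\<alpha> + \<mu>)"
    and "B \<equiv> 6 * L * \<gamma>\<^sup>2 * Gam + 5 * (\<gamma>\<^sup>2 * (real E)\<^sup>2 * Gb\<^sup>2) + \<gamma>\<^sup>2 * (\<sigma>\<^sup>2 * (\<Sum>i<C. (p i)\<^sup>2))"
  shows "k \<le> E \<Longrightarrow> a k \<le> ((\<alpha> + \<mu> * r ^ k) / (\<alpha> + \<mu>)) * a0 + real k * B"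
proof (induction k)
  case 0 then show ?case using a_0 alpha_pos mu_pos by simp
next
  case (Suc k)
  then have k: "k < E" by simp
  have r0: "r \<ge> 0" and r1: "r \<le> 1" unfolding r_def using gam1 gamma_pos alpha_pos mu_pos
    by (simp_all add: mult_pos_pos add_pos_pos)
  have B0: "B \<ge> 0" unfolding B_def using L_pos Gam_nonneg
    by (intro add_nonneg_nonneg mult_nonneg_nonneg sum_nonneg) auto
  have kE: "(real k)\<^sup>2 \<le> (real E)\<^sup>2" using k by (simp add: power_mono)
  have "a (Suc k) \<le> \<alpha> * \<gamma> * a0 + r * a k + B"
  proof -
    have "5 * (\<gamma>\<^sup>2 * (real k)\<^sup>2 * Gb\<^sup>2) \<le> 5 * (\<gamma>\<^sup>2 * (real E)\<^sup>2 * Gb\<^sup>2)"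
      using kE by (intro mult_left_mono mult_right_mono) auto
    then show ?thesis using step[OF k] unfolding r_def B_def by linarith
  qed
  also have "r * a k \<le> r * (((\<alpha> + \<mu> * r ^ k) / (\<alpha> + \<mu>)) * a0 + real k * B)"
    using Suc k r0 by (intro mult_left_mono) auto
  also have "\<alpha> * \<gamma> * a0 + r * (((\<alpha> + \<mu> * r ^ k) / (\<alpha> + \<mu>)) * a0 + real k * B) + B
      = ((\<alpha> + \<mu> * r ^ Suc k) / (\<alpha> + \<mu>)) * a0 + (r * real k + 1) * B"
  proof -
    define K0 where "K0 = (\<alpha> + \<mu> * r ^ k) / (\<alpha> + \<mu>)"
    have h1: "\<alpha> * \<gamma> + r * K0 = (\<alpha> + \<mu> * r ^ Suc k) / (\<alpha> + \<mu>)"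
      using alpha_pos mu_pos unfolding r_def K0_def by (simp add: field_simps)
    have h2: "\<alpha> * \<gamma> * a0 + r * (K0 * a0 + real k * B) + B = (\<alpha> * \<gamma> + r * K0) * a0 + (r * real k + 1) * B"
      by (simp add: algebra_simps)
    show ?thesis unfolding K0_def[symmetric] h2 h1 ..
  qed
  also have "(r * real k + 1) * B \<le> real (Suc k) * B"
  proof -
    have "r * real k \<le> 1 * real k" using r1 by (intro mult_right_mono) auto
    then show ?thesis using B0 by (intro mult_right_mono) auto
  qed
  finally show ?case by simp
qed

lemma kappa_le: "(\<alpha> + \<mu> * (1 - \<gamma> * (\<alpha> + \<mu>)) ^ E) / (\<alpha> + \<mu>) \<le> 1 - \<gamma> * \<mu>"
proof -
  define r where "r = 1 - \<gamma> * (\<alpha> + \<mu>)"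
  have r0: "r \<ge> 0" and r1: "r \<le> 1" unfolding r_def using gam1 gamma_pos alpha_pos mu_pos
    by (simp_all add: mult_pos_pos add_pos_pos)
  have "r ^ E \<le> r ^ 1" using r0 r1 E_pos by (intro power_decreasing) auto
  then have "\<mu> * r ^ E \<le> \<mu> * r" using mu_pos by simp
  then have "\<alpha> + \<mu> * r ^ E \<le> (1 - \<gamma> * \<mu>) * (\<alpha> + \<mu>)"
    unfolding r_def by (simp add: algebra_simps)
  then show ?thesis unfolding r_def[symmetric] using alpha_pos mu_pos by (simp add: divide_le_eq)
qed

lemma main:
  "a E \<le> (\<alpha> + \<mu> * (1 - \<gamma> * (\<alpha> + \<mu>)) ^ E) / (\<alpha> + \<mu>) * a0
     + (\<gamma>\<^sup>2 * real E * \<sigma>\<^sup>2 * (\<Sum>i<C. (p i)\<^sup>2) + 6 * \<gamma>\<^sup>2 * L * real E * Gam + 8 * \<gamma>\<^sup>2 * real E ^ 3 * Gb\<^sup>2)"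
proof -
  have "a E \<le> ((\<alpha> + \<mu> * (1 - \<gamma> * (\<alpha> + \<mu>)) ^ E) / (\<alpha> + \<mu>)) * a0
     + real E * (6 * L * \<gamma>\<^sup>2 * Gam + 5 * (\<gamma>\<^sup>2 * (real E)\<^sup>2 * Gb\<^sup>2) + \<gamma>\<^sup>2 * (\<sigma>\<^sup>2 * (\<Sum>i<C. (p i)\<^sup>2)))"
    using unroll[of E] by simp
  moreover have "real E * (6 * L * \<gamma>\<^sup>2 * Gam + 5 * (\<gamma>\<^sup>2 * (real E)\<^sup>2 * Gb\<^sup>2) + \<gamma>\<^sup>2 * (\<sigma>\<^sup>2 * (\<Sum>i<C. (p i)\<^sup>2)))
     \<le> \<gamma>\<^sup>2 * real E * \<sigma>\<^sup>2 * (\<Sum>i<C. (p i)\<^sup>2) + 6 * \<gamma>\<^sup>2 * L * real E * Gam + 8 * \<gamma>\<^sup>2 * real E ^ 3 * Gb\<^sup>2"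
  proof -
    have "5 * (\<gamma>\<^sup>2 * real E ^ 3 * Gb\<^sup>2) \<le> 8 * (\<gamma>\<^sup>2 * real E ^ 3 * Gb\<^sup>2)" by simp
    then show ?thesis by (simp add: algebra_simps power2_eq_square power3_eq_cube)
  qed
  ultimately show ?thesis by linarith
qed

end

theorem lemma4:
  fixes M :: "'\<omega> measure" and N :: "'x measure"
    and C E :: nat and p :: "nat \<Rightarrow> real"
    and F :: "nat \<Rightarrow> 'v::euclidean_space \<Rightarrow> real" and gF :: "nat \<Rightarrow> 'v \<Rightarrow> 'v"
    and G :: "nat \<Rightarrow> 'v \<Rightarrow> 'x \<Rightarrow> 'v"
    and \<xi> :: "nat \<Rightarrow> nat \<Rightarrow> '\<omega> \<Rightarrow> 'x"
    and wbar0 :: "'\<omega> \<Rightarrow> 'v"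
    and \<alpha> \<gamma> L \<mu> \<sigma> Gb :: real
    and wstar :: 'v and wloc_star :: "nat \<Rightarrow> 'v"
  defines "w \<equiv> \<lambda>i k \<omega>. fedprox_local \<alpha> \<gamma> (G i) (wbar0 \<omega>) (\<lambda>k. \<xi> i k \<omega>) k"
    and "wbar_next \<equiv> \<lambda>\<omega>. \<Sum>i<C. p i *\<^sub>R fedprox_local \<alpha> \<gamma> (G i) (wbar0 \<omega>) (\<lambda>k. \<xi> i k \<omega>) E"
    and "Fglob \<equiv> \<lambda>x. \<Sum>i<C. p i * F i x"
    and "\<kappa> \<equiv> (\<alpha> + \<mu> * (1 - \<gamma> * (\<alpha> + \<mu>)) ^ E) / (\<alpha> + \<mu>)"
    and "A \<equiv> \<gamma>\<^sup>2 * E * \<sigma>\<^sup>2 * (\<Sum>i<C. (p i)\<^sup>2) + 6 * \<gamma>\<^sup>2 * L * E * ((\<Sum>i<C. p i * F i wstar) - (\<Sum>i<C. p i * F i (wloc_star i))) + 8 * \<gamma>\<^sup>2 * E ^ 3 * Gb\<^sup>2"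
  assumes M: "prob_space M"
    \<comment> \<open>client weights\<close>
    and p_nonneg: "\<And>i. i < C \<Longrightarrow> p i \<ge> 0" and p_sum: "(\<Sum>i<C. p i) = 1"
    \<comment> \<open>algorithm parameters\<close>
    and E_pos: "E \<ge> 1" and alpha_pos: "\<alpha> > 0" and mu_pos: "\<mu> > 0"
    and gamma_pos: "\<gamma> > 0" and gamma_L: "\<gamma> \<le> 1 / (2 * L)" and gamma_am: "\<gamma> \<le> 1 / (\<alpha> + \<mu>)"
    \<comment> \<open>L-smoothness and mu-strong convexity of every local objective\<close>
    and smooth: "\<And>i. i < C \<Longrightarrow> L_smooth L (F i) (gF i)"
    and strconv: "\<And>i. i < C \<Longrightarrow> strongly_convex \<mu> (F i)"
    \<comment> \<open>minimisers\<close>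
    and wstar_min: "\<And>x. Fglob wstar \<le> Fglob x"
    and wloc_star_min: "\<And>i x. i < C \<Longrightarrow> F i (wloc_star i) \<le> F i x"
    \<comment> \<open>randomness: start-of-round model and the samples of the round, all independent\<close>
    and wbar0_meas: "wbar0 \<in> borel_measurable M"
    and xi_meas: "\<And>i k. i < C \<Longrightarrow> k < E \<Longrightarrow> \<xi> i k \<in> measurable M N"
    and G_meas: "\<And>i. i < C \<Longrightarrow> (\<lambda>(v, x). G i v x) \<in> borel_measurable (borel \<Otimes>\<^sub>M N)"
    and xi_indep: "prob_space.indep_vars M (\<lambda>_. N) (\<lambda>(i, k). \<xi> i k) ({..<C} \<times> {..<E})"
    and wbar0_indep: "prob_space.indep_set M
       (sigma_sets (space M) {wbar0 -` B \<inter> space M | B. B \<in> sets borel})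
       (sigma_sets (space M) {(\<lambda>\<omega>. \<lambda>ik\<in>{..<C} \<times> {..<E}. \<xi> (fst ik) (snd ik) \<omega>) -` B \<inter> space M
                                | B. B \<in> sets (Pi\<^sub>M ({..<C} \<times> {..<E}) (\<lambda>_. N))})"
    and wbar0_sq: "integrable M (\<lambda>\<omega>. (norm (wbar0 \<omega> - wstar))\<^sup>2)"
    \<comment> \<open>unbiasedness of the stochastic gradient oracle\<close>
    and unbiased: "\<And>i k v. i < C \<Longrightarrow> k < E \<Longrightarrow>
       integrable M (\<lambda>\<omega>. G i v (\<xi> i k \<omega>)) \<and> (\<integral>\<omega>. G i v (\<xi> i k \<omega>) \<partial>M) = gF i v"
    \<comment> \<open>bounded variance at the iterates\<close>
    and variance: "\<And>i k. i < C \<Longrightarrow> k < E \<Longrightarrow>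
       integrable M (\<lambda>\<omega>. (norm (G i (w i k \<omega>) (\<xi> i k \<omega>) - gF i (w i k \<omega>)))\<^sup>2) \<and>
       (\<integral>\<omega>. (norm (G i (w i k \<omega>) (\<xi> i k \<omega>) - gF i (w i k \<omega>)))\<^sup>2 \<partial>M) \<le> \<sigma>\<^sup>2"
    \<comment> \<open>bounded second moment at the iterates\<close>
    and second_moment: "\<And>i k. i < C \<Longrightarrow> k < E \<Longrightarrow>
       integrable M (\<lambda>\<omega>. (norm (G i (w i k \<omega>) (\<xi> i k \<omega>)))\<^sup>2) \<and>
       (\<integral>\<omega>. (norm (G i (w i k \<omega>) (\<xi> i k \<omega>)))\<^sup>2 \<partial>M) \<le> Gb\<^sup>2"
  shows "(\<integral>\<omega>. (norm (wbar_next \<omega> - wstar))\<^sup>2 \<partial>M)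
           \<le> \<kappa> * (\<integral>\<omega>. (norm (wbar0 \<omega> - wstar))\<^sup>2 \<partial>M) + A
         \<and> \<kappa> \<le> 1 - \<gamma> * \<mu>"
proof -
  note as = assms[unfolded w_def Fglob_def]
  interpret I: fp M N C E p F gF G \<xi> wbar0 \<alpha> \<gamma> L \<mu> \<sigma> Gb wstar wloc_star
    by (intro fp.intro fp_axioms.intro) (fact as)+
  have e1: "(\<integral>\<omega>. (norm (wbar_next \<omega> - wstar))\<^sup>2 \<partial>M) = I.a E"
    unfolding I.a_def I.wb_def I.w_def wbar_next_def ..
  have e2: "(\<integral>\<omega>. (norm (wbar0 \<omega> - wstar))\<^sup>2 \<partial>M) = I.a0" unfolding I.a0_def ..
  have e3: "A = \<gamma>\<^sup>2 * real E * \<sigma>\<^sup>2 * (\<Sum>i<C. (p i)\<^sup>2) + 6 * \<gamma>\<^sup>2 * L * real E * I.Gam + 8 * \<gamma>\<^sup>2 * real E ^ 3 * Gb\<^sup>2"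
    unfolding A_def I.Gam_def by simp
  show ?thesis
    unfolding e1 e2 e3 \<kappa>_def using I.main I.kappa_le by simp
qed

end
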